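(* Let $s\geqslant1$. The Beth model $\mathcal{B}_s$ forces (at its root) the universal closures of all instances, with types $\leqslant s$, of the following axioms for lawless functionals ($1\leqslant n\leqslant s$): (LL1) $\exists\mathcal F^n(\forall y\leqslant x)(\mathcal F(y)=F^n(y))$; (LL2) $\mathcal F^n=\mathcal G^n\vee\mathcal F^n\neq\mathcal G^n$; (LL3) $\varphi(\mathcal H^n)\supset\exists x\forall\mathcal G^n[(\forall y<x)(\mathcal G(y)=\mathcal H(y))\supset\varphi(\mathcal G)]$, for every formula $\varphi$ of $LP_s$ with $sort(\varphi)\leqslant n$ having no free variables of type $n$ over non-lawlike functionals other than $\mathcal H^n$.
   Context: $sort(\varphi)$ is the maximal type of the free variables of $\varphi$ (0 if none); number variables have type 0, functional variables $F^n,A^n,\mathcal F^n$ have type $n$; non-lawlike variables of type $n$ are the $F^n$ and $\mathcal F^n$. Language $L_s$ ($s\geqslant1$). Variables: $x,y,z,\dots$ of type 0 (natural numbers); for $1\leqslant n\leqslant s$, variables $F^n,G^n,\dots$ (over $n$-functionals), $A^n,B^n,\dots$ (over lawlike $n$-functionals), $\mathcal{F}^n,\mathcal{G}^n,\dots$ (over lawless $n$-functionals). Constants $0$, $K^n$. Terms/$n$-functionals: number variables and $0$ are terms; type-$n$ variables and $K^n$ are $n$-functionals; $St,t+\tau,t\cdot\tau$ terms; $N^n(Z)$ an $n$-functional; $Z(t)=Ap^1(Z,t)$ a term for a 1-functional $Z$; $Z(t)=Ap^{n+1}(Z,t)$ an $n$-functional for an $(n+1)$-functional $Z$. Atomic formulas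 $t=_0\tau$, $Z=_nV$; formulas with $\bot,\wedge,\vee,\supset,\forall,\exists$, $\neg\varphi:=\varphi\supset\bot$. $LP_s$ adds atomic formulas $\vdash_z\varphi(\bar X)$ for terms $z$ and formulas $\varphi$ of $L_s$ with free variables in $\bar X$. Beth model $\mathcal{B}_s$. Path = maximal linearly ordered subset; path through $x$ = path containing $x$. $b^{(m)}$: length-$m$ sequences; $b^*$: finite sequences, $y\leqslant x$ iff $x$ is an initial segment of $y$. $a_0=\omega$, $d_0=\{\langle x\rangle:x\in\omega^*\}$, $\langle x\rangle\preccurlyeq_0\langle y\rangle$ iff $x\leqslant y$. For $k\geqslant1$: $a_k$ = partial $f:d_{k-1}\times\omega\dashrightarrow a_{k-1}$, monotonic ($y\preccurlyeq_{k-1}x\Rightarrow f(x,\cdot)\subseteq f(y,\cdot)$) and complete (for each path $S$ in $d_{k-1}$, $\bigcup_{x\in S}f(x,\cdot)$ total); $d_k=\bigcup_m a_0^{(m)}\times\dots\times a_k^{(m)}$, $x\preccurlyeq_ky$ iff $\langle x\rangle_i\leqslant\langle y\rangle_i$ for $i\leqslant k$, $lh(x)=m$. Nodes $M=d_{s-1}$, $\preccurlyeq=\preccurlyeq_{s-1}$, root $\varepsilon$; $\bar\alpha(k)=\langle\alpha_0,\dots,\alpha_{k-1}\rangle\in d_{k-1}$. Domains: $\omega$; $a_k$; $b_k=\{f\in a_k:f(\text{root},\cdot)\text{ total}\}$; $l_k=\{\nu_k(\xi):\xi\in c_k\}$, $c_k$ = maps $\xi:\omega\times a_{k-1}\to a_{k-1}$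 with each $\xi(n,\cdot)$ bijective, $\nu_k(\xi)(x,n)=\xi(n,\langle\langle x\rangle_{k-1}\rangle_n)$ if $n<lh(x)$, else undefined. Interpretations: $\widehat K^1(x,n)=0$, $\widehat K^{k+1}(x,n)=\widehat K^k$; usual $0,S,+,\cdot$; $N^k\mapsto S^k$ ($S^0(x)=x+1$, $S^{n+1}(f)=S^n\circ f$); at $\alpha$, $Ap^k(f,n)\mapsto f(\bar\alpha(k),n)$; $Z^{[\alpha]}$ is the possibly undefined value. $Val(\alpha,Z=_kV)=T$ iff both defined and equal; $Val(\alpha,\vdash_t\varphi)=T$ iff $t^{[\alpha]}$ defined and some $\gamma\succcurlyeq\alpha$ with $lh(\gamma)=t^{[\alpha]}$ forces $\varphi$. Forcing (Beth): atomic: every path through $\alpha$ meets $\beta$ with $Val=T$; $\alpha\not\Vdash\bot$; $\wedge$ componentwise; $\vee$ and $\exists$: every path through $\alpha$ meets a node forcing a disjunct / an instance $\psi(c)$; $\supset$: every $\beta\preccurlyeq\alpha$ forcing the antecedent forces the consequent; $\forall$: all instances forced at $\alpha$. $\mathcal B_s\Vdash\varphi$ iff $\varepsilon\Vdash\varphi$. *)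

theory Defs
  imports Main "HOL-Library.Sublist"
begin

section \<open>Syntax of L_s and LP_s\<close>

text \<open>Kinds of functional variables: Gen = F^n (arbitrary), Law = A^n (lawlike),
  Lls = calligraphic F^n (lawless).  A functional variable is FV kind type index.\<close>
datatype kind = Gen | Law | Lls

datatype trm = NV nat | Zero | Sc trm | Pl trm trm | Tm trm trm | Ap1 fnl trm
     and fnl = FV kind nat nat | KC nat | NS fnl | ApF fnl trm

text \<open>Prv t phi is the atomic formula  |-_t phi  of LP_s.\<close>
datatype frm = Bot | EqN trm trm | EqF fnl fnl
  | Cj frm frm | Dj frm frm | Im frm frm
  | AllN nat frm | ExN nat frm
  | AllF kind nat nat frm | ExF kind nat nat frm
  | Prv trm frm

definition Ng :: "frm \<Rightarrow> frm" where "Ng \<phi> = Im \<phi> Bot"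

primrec ty :: "fnl \<Rightarrow> nat" where
  "ty (FV k n i) = n"
| "ty (KC n) = n"
| "ty (NS Z) = ty Z"
| "ty (ApF Z t) = ty Z - 1"

primrec wfT :: "nat \<Rightarrow> trm \<Rightarrow> bool" and wfF :: "nat \<Rightarrow> fnl \<Rightarrow> bool" where
  "wfT s (NV i) = True"
| "wfT s Zero = True"
| "wfT s (Sc t) = wfT s t"
| "wfT s (Pl t u) = (wfT s t \<and> wfT s u)"
| "wfT s (Tm t u) = (wfT s t \<and> wfT s u)"
| "wfT s (Ap1 Z t) = (wfF s Z \<and> ty Z = 1 \<and> wfT s t)"
| "wfF s (FV k n i) = (1 \<le> n \<and> n \<le> s)"
| "wfF s (KC n) = (1 \<le> n \<and> n \<le> s)"
| "wfF s (NS Z) = wfF s Z"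
| "wfF s (ApF Z t) = (wfF s Z \<and> 2 \<le> ty Z \<and> wfT s t)"

primrec isL :: "frm \<Rightarrow> bool" where
  "isL Bot = True"
| "isL (EqN t u) = True"
| "isL (EqF Z V) = True"
| "isL (Cj a b) = (isL a \<and> isL b)"
| "isL (Dj a b) = (isL a \<and> isL b)"
| "isL (Im a b) = (isL a \<and> isL b)"
| "isL (AllN i a) = isL a"
| "isL (ExN i a) = isL a"
| "isL (AllF k n i a) = isL a"
| "isL (ExF k n i a) = isL a"
| "isL (Prv t a) = False"

primrec wfP :: "nat \<Rightarrow> frm \<Rightarrow> bool" where
  "wfP s Bot = True"
| "wfP s (EqN t u) = (wfT s t \<and> wfT s u)"
| "wfP s (EqF Z V) = (wfF s Z \<and> wfF s V \<and> ty Z = ty V)"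
| "wfP s (Cj a b) = (wfP s a \<and> wfP s b)"
| "wfP s (Dj a b) = (wfP s a \<and> wfP s b)"
| "wfP s (Im a b) = (wfP s a \<and> wfP s b)"
| "wfP s (AllN i a) = wfP s a"
| "wfP s (ExN i a) = wfP s a"
| "wfP s (AllF k n i a) = (1 \<le> n \<and> n \<le> s \<and> wfP s a)"
| "wfP s (ExF k n i a) = (1 \<le> n \<and> n \<le> s \<and> wfP s a)"
| "wfP s (Prv t a) = (wfT s t \<and> wfP s a \<and> isL a)"

primrec fvNT :: "trm \<Rightarrow> nat set" and fvNF :: "fnl \<Rightarrow> nat set" where
  "fvNT (NV i) = {i}"
| "fvNT Zero = {}"
| "fvNT (Sc t) = fvNT t"
| "fvNT (Pl t u) = fvNT t \<union> fvNT u"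
| "fvNT (Tm t u) = fvNT t \<union> fvNT u"
| "fvNT (Ap1 Z t) = fvNF Z \<union> fvNT t"
| "fvNF (FV k n i) = {}"
| "fvNF (KC n) = {}"
| "fvNF (NS Z) = fvNF Z"
| "fvNF (ApF Z t) = fvNF Z \<union> fvNT t"

primrec fvFT :: "trm \<Rightarrow> (kind \<times> nat \<times> nat) set"
    and fvFF :: "fnl \<Rightarrow> (kind \<times> nat \<times> nat) set" where
  "fvFT (NV i) = {}"
| "fvFT Zero = {}"
| "fvFT (Sc t) = fvFT t"
| "fvFT (Pl t u) = fvFT t \<union> fvFT u"
| "fvFT (Tm t u) = fvFT t \<union> fvFT u"
| "fvFT (Ap1 Z t) = fvFF Z \<union> fvFT t"
| "fvFF (FV k n i) = {(k, n, i)}"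
| "fvFF (KC n) = {}"
| "fvFF (NS Z) = fvFF Z"
| "fvFF (ApF Z t) = fvFF Z \<union> fvFT t"

primrec fvN :: "frm \<Rightarrow> nat set" where
  "fvN Bot = {}"
| "fvN (EqN t u) = fvNT t \<union> fvNT u"
| "fvN (EqF Z V) = fvNF Z \<union> fvNF V"
| "fvN (Cj a b) = fvN a \<union> fvN b"
| "fvN (Dj a b) = fvN a \<union> fvN b"
| "fvN (Im a b) = fvN a \<union> fvN b"
| "fvN (AllN i a) = fvN a - {i}"
| "fvN (ExN i a) = fvN a - {i}"
| "fvN (AllF k n i a) = fvN a"
| "fvN (ExF k n i a) = fvN a"
| "fvN (Prv t a) = fvNT t \<union> fvN a"

primrec fvF :: "frm \<Rightarrow> (kind \<times> nat \<times> nat) set" where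
  "fvF Bot = {}"
| "fvF (EqN t u) = fvFT t \<union> fvFT u"
| "fvF (EqF Z V) = fvFF Z \<union> fvFF V"
| "fvF (Cj a b) = fvF a \<union> fvF b"
| "fvF (Dj a b) = fvF a \<union> fvF b"
| "fvF (Im a b) = fvF a \<union> fvF b"
| "fvF (AllN i a) = fvF a"
| "fvF (ExN i a) = fvF a"
| "fvF (AllF k n i a) = fvF a - {(k, n, i)}"
| "fvF (ExF k n i a) = fvF a - {(k, n, i)}"
| "fvF (Prv t a) = fvFT t \<union> fvF a"

primrec allvF :: "frm \<Rightarrow> (kind \<times> nat \<times> nat) set" where
  "allvF Bot = {}"
| "allvF (EqN t u) = fvFT t \<union> fvFT u"
| "allvF (EqF Z V) = fvFF Z \<union> fvFF V"
| "allvF (Cj a b) = allvF a \<union> allvF b"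
| "allvF (Dj a b) = allvF a \<union> allvF b"
| "allvF (Im a b) = allvF a \<union> allvF b"
| "allvF (AllN i a) = allvF a"
| "allvF (ExN i a) = allvF a"
| "allvF (AllF k n i a) = insert (k, n, i) (allvF a)"
| "allvF (ExF k n i a) = insert (k, n, i) (allvF a)"
| "allvF (Prv t a) = fvFT t \<union> allvF a"

text \<open>sort(phi): maximal type of the free variables (0 if none; number variables have type 0)\<close>
definition sortf :: "frm \<Rightarrow> nat" where
  "sortf \<phi> = Max (insert 0 ((\<lambda>(k, m, i). m) ` fvF \<phi>))"

primrec substT :: "nat \<Rightarrow> nat \<Rightarrow> nat \<Rightarrow> trm \<Rightarrow> trm"
    and substF :: "nat \<Rightarrow> nat \<Rightarrow> nat \<Rightarrow> fnl \<Rightarrow> fnl" where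
  "substT n h g (NV i) = NV i"
| "substT n h g Zero = Zero"
| "substT n h g (Sc t) = Sc (substT n h g t)"
| "substT n h g (Pl t u) = Pl (substT n h g t) (substT n h g u)"
| "substT n h g (Tm t u) = Tm (substT n h g t) (substT n h g u)"
| "substT n h g (Ap1 Z t) = Ap1 (substF n h g Z) (substT n h g t)"
| "substF n h g (FV k m i) = (if k = Lls \<and> m = n \<and> i = h then FV Lls n g else FV k m i)"
| "substF n h g (KC m) = KC m"
| "substF n h g (NS Z) = NS (substF n h g Z)"
| "substF n h g (ApF Z t) = ApF (substF n h g Z) (substT n h g t)"

primrec substL :: "nat \<Rightarrow> nat \<Rightarrow> nat \<Rightarrow> frm \<Rightarrow> frm" where
  "substL n h g Bot = Bot"
| "substL n h g (EqN t u) = EqN (substT n h g t) (substT n h g u)"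
| "substL n h g (EqF Z V) = EqF (substF n h g Z) (substF n h g V)"
| "substL n h g (Cj a b) = Cj (substL n h g a) (substL n h g b)"
| "substL n h g (Dj a b) = Dj (substL n h g a) (substL n h g b)"
| "substL n h g (Im a b) = Im (substL n h g a) (substL n h g b)"
| "substL n h g (AllN i a) = AllN i (substL n h g a)"
| "substL n h g (ExN i a) = ExN i (substL n h g a)"
| "substL n h g (AllF k m i a) =
     (if (k, m, i) = (Lls, n, h) then AllF k m i a else AllF k m i (substL n h g a))"
| "substL n h g (ExF k m i a) =
     (if (k, m, i) = (Lls, n, h) then ExF k m i a else ExF k m i (substL n h g a))"
| "substL n h g (Prv t a) = Prv (substT n h g t) (substL n h g a)"

text \<open>Bounded quantifiers: (\<forall>y\<le>x) phi := \<forall>y (\<exists>z (y+z=x) \<supset> phi),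
  (\<forall>y<x) phi := \<forall>y (\<exists>z (y+Sz=x) \<supset> phi), with z := x+y+1 (distinct from x,y;
  its scope is only the antecedent).\<close>
definition all_le :: "nat \<Rightarrow> nat \<Rightarrow> frm \<Rightarrow> frm" where
  "all_le y x \<phi> = AllN y (Im (ExN (Suc (x + y)) (EqN (Pl (NV y) (NV (Suc (x + y)))) (NV x))) \<phi>)"

definition all_lt :: "nat \<Rightarrow> nat \<Rightarrow> frm \<Rightarrow> frm" where
  "all_lt y x \<phi> = AllN y (Im (ExN (Suc (x + y)) (EqN (Pl (NV y) (Sc (NV (Suc (x + y))))) (NV x))) \<phi>)"

definition appEq :: "nat \<Rightarrow> fnl \<Rightarrow> fnl \<Rightarrow> nat \<Rightarrow> frm" where
  "appEq n Z V y = (if n = 1 then EqN (Ap1 Z (NV y)) (Ap1 V (NV y))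
                    else EqF (ApF Z (NV y)) (ApF V (NV y)))"

definition LL1 :: "nat \<Rightarrow> nat \<Rightarrow> nat \<Rightarrow> nat \<Rightarrow> nat \<Rightarrow> frm" where
  "LL1 n x y i j = ExF Lls n j (all_le y x (appEq n (FV Lls n j) (FV Gen n i) y))"

definition LL2 :: "nat \<Rightarrow> nat \<Rightarrow> nat \<Rightarrow> frm" where
  "LL2 n i j = Dj (EqF (FV Lls n i) (FV Lls n j)) (Ng (EqF (FV Lls n i) (FV Lls n j)))"

definition LL3 :: "nat \<Rightarrow> frm \<Rightarrow> nat \<Rightarrow> nat \<Rightarrow> nat \<Rightarrow> nat \<Rightarrow> frm" where
  "LL3 n \<phi> h g x y = Im \<phi> (ExN x (AllF Lls n g
      (Im (all_lt y x (appEq n (FV Lls n g) (FV Lls n h) y)) (substL n h g \<phi>))))"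

section \<open>The Beth model B_s\<close>

text \<open>Nodes of d_k are tuples (x_0,...,x_k) of sequences of a common length m, x_i over a_i;
  represented as lists of k+1 lists.  DD As is d_k where As = [a_0,...,a_k].\<close>
definition DD :: "'u set list \<Rightarrow> 'u list list set" where
  "DD As = {x. length x = length As \<and>
      (\<exists>m. \<forall>i<length As. length (x ! i) = m \<and> set (x ! i) \<subseteq> As ! i)}"

text \<open>x \<preceq> y iff each component of y is an initial segment of the component of x\<close>
definition prec :: "'u list list \<Rightarrow> 'u list list \<Rightarrow> bool" where
  "prec x y \<longleftrightarrow> length x = length y \<and> (\<forall>i<length x. prefix (y ! i) (x ! i))"

definition linset :: "('a \<Rightarrow> 'a \<Rightarrow> bool) \<Rightarrow> 'a set \<Rightarrow> bool" where
  "linset r Q \<longleftrightarrow> (\<forall>x\<in>Q. \<forall>y\<in>Q. r x y \<or> r y x)"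

definition is_path :: "'a set \<Rightarrow> ('a \<Rightarrow> 'a \<Rightarrow> bool) \<Rightarrow> 'a set \<Rightarrow> bool" where
  "is_path S r P \<longleftrightarrow> P \<subseteq> S \<and> linset r P \<and>
      (\<forall>Q. Q \<subseteq> S \<and> linset r Q \<and> P \<subseteq> Q \<longrightarrow> Q = P)"

text \<open>Raw As: the monotonic complete partial maps d_{k-1} \<times> \<omega> -> a_{k-1}, As = [a_0..a_{k-1}]
  (a partial map is a total HOL function into option, None outside d_{k-1}).\<close>
definition Raw :: "'u set list \<Rightarrow> ('u list list \<times> nat \<Rightarrow> 'u option) set" where
  "Raw As = {f. (\<forall>x n. x \<notin> DD As \<longrightarrow> f (x, n) = None)
      \<and> (\<forall>x n v. f (x, n) = Some v \<longrightarrow> v \<in> last As)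
      \<and> (\<forall>x\<in>DD As. \<forall>y\<in>DD As. prec y x \<longrightarrow> (\<forall>n v. f (x, n) = Some v \<longrightarrow> f (y, n) = Some v))
      \<and> (\<forall>P. is_path (DD As) prec P \<longrightarrow> (\<forall>n. \<exists>x\<in>P. f (x, n) \<noteq> None))}"

definition LRaw :: "'u set list \<Rightarrow> ('u list list \<times> nat \<Rightarrow> 'u option) set" where
  "LRaw As = {(\<lambda>(x, n). if x \<in> DD As \<and> n < length (hd x) then Some (\<xi> n (last x ! n)) else None)
      | \<xi>. \<forall>n. bij_betw (\<xi> n) (last As) (last As)}"

type_synonym 'u env = "(nat \<Rightarrow> nat) \<times> (kind \<Rightarrow> nat \<Rightarrow> nat \<Rightarrow> 'u)"

text \<open>The model is built inside a universe type 'u: numbers are coded by num, and an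
  n-functional f (n \<ge> 1) is coded by enc f.  The main theorem assumes these codings injective.\<close>
locale beth =
  fixes num :: "nat \<Rightarrow> 'u"
    and enc :: "('u list list \<times> nat \<Rightarrow> 'u option) \<Rightarrow> 'u"
    and s :: nat
begin

fun As :: "nat \<Rightarrow> 'u set list" where
  "As 0 = [range num]"
| "As (Suc k) = As k @ [enc ` Raw (As k)]"

definition A :: "nat \<Rightarrow> 'u set" where "A k = As k ! k"
definition D :: "nat \<Rightarrow> 'u list list set" where "D k = DD (As k)"

definition B :: "nat \<Rightarrow> 'u set" where
  "B k = enc ` {f \<in> Raw (As (k - 1)). \<forall>n. f (replicate k [], n) \<noteq> None}"
definition L :: "nat \<Rightarrow> 'u set" where
  "L k = enc ` LRaw (As (k - 1))"

definition Univ :: "('u list list \<times> nat \<Rightarrow> 'u option) set" where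
  "Univ = (\<Union>k\<in>{1..s}. Raw (As (k - 1)) \<union> LRaw (As (k - 1)))"

definition dec :: "'u \<Rightarrow> ('u list list \<times> nat \<Rightarrow> 'u option)" where
  "dec u = inv_into Univ enc u"

definition M :: "'u list list set" where "M = D (s - 1)"
definition root :: "'u list list" where "root = replicate s []"

fun Kc :: "nat \<Rightarrow> 'u" where
  "Kc 0 = num 0"
| "Kc (Suc k) = enc (\<lambda>(x, m). if x \<in> D k then Some (Kc k) else None)"

fun Sop :: "nat \<Rightarrow> 'u \<Rightarrow> 'u" where
  "Sop 0 u = num (inv num u + 1)"
| "Sop (Suc k) u = enc (\<lambda>p. map_option (Sop k) (dec u p))"

primrec evT :: "'u env \<Rightarrow> 'u list list \<Rightarrow> trm \<Rightarrow> nat option"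
    and evF :: "'u env \<Rightarrow> 'u list list \<Rightarrow> fnl \<Rightarrow> 'u option" where
  "evT \<rho> \<alpha> (NV i) = Some (fst \<rho> i)"
| "evT \<rho> \<alpha> Zero = Some 0"
| "evT \<rho> \<alpha> (Sc t) = map_option Suc (evT \<rho> \<alpha> t)"
| "evT \<rho> \<alpha> (Pl t u) = (case (evT \<rho> \<alpha> t, evT \<rho> \<alpha> u) of
      (Some a, Some b) \<Rightarrow> Some (a + b) | _ \<Rightarrow> None)"
| "evT \<rho> \<alpha> (Tm t u) = (case (evT \<rho> \<alpha> t, evT \<rho> \<alpha> u) of
      (Some a, Some b) \<Rightarrow> Some (a * b) | _ \<Rightarrow> None)"
| "evT \<rho> \<alpha> (Ap1 Z t) = (case (evF \<rho> \<alpha> Z, evT \<rho> \<alpha> t) of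
      (Some f, Some n) \<Rightarrow> map_option (inv num) (dec f (take 1 \<alpha>, n)) | _ \<Rightarrow> None)"
| "evF \<rho> \<alpha> (FV k n i) = Some (snd \<rho> k n i)"
| "evF \<rho> \<alpha> (KC n) = Some (Kc n)"
| "evF \<rho> \<alpha> (NS Z) = map_option (Sop (ty Z)) (evF \<rho> \<alpha> Z)"
| "evF \<rho> \<alpha> (ApF Z t) = (case (evF \<rho> \<alpha> Z, evT \<rho> \<alpha> t) of
      (Some f, Some n) \<Rightarrow> dec f (take (ty Z) \<alpha>, n) | _ \<Rightarrow> None)"

fun Dom :: "kind \<Rightarrow> nat \<Rightarrow> 'u set" where
  "Dom Gen n = A n"
| "Dom Law n = B n"
| "Dom Lls n = L n"

definition updN :: "'u env \<Rightarrow> nat \<Rightarrow> nat \<Rightarrow> 'u env" where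
  "updN \<rho> i c = ((fst \<rho>)(i := c), snd \<rho>)"
definition updF :: "'u env \<Rightarrow> kind \<Rightarrow> nat \<Rightarrow> nat \<Rightarrow> 'u \<Rightarrow> 'u env" where
  "updF \<rho> k n i c = (fst \<rho>, (snd \<rho>)(k := (snd \<rho> k)(n := (snd \<rho> k n)(i := c))))"

definition thru :: "'u list list \<Rightarrow> 'u list list set set" where
  "thru \<alpha> = {P. is_path M prec P \<and> \<alpha> \<in> P}"

primrec frc :: "frm \<Rightarrow> 'u env \<Rightarrow> 'u list list \<Rightarrow> bool" where
  "frc Bot \<rho> \<alpha> = False"
| "frc (EqN t u) \<rho> \<alpha> = (\<forall>P\<in>thru \<alpha>. \<exists>\<beta>\<in>P.
      evT \<rho> \<beta> t \<noteq> None \<and> evT \<rho> \<beta> t = evT \<rho> \<beta> u)"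
| "frc (EqF Z V) \<rho> \<alpha> = (\<forall>P\<in>thru \<alpha>. \<exists>\<beta>\<in>P.
      evF \<rho> \<beta> Z \<noteq> None \<and> evF \<rho> \<beta> Z = evF \<rho> \<beta> V)"
| "frc (Cj a b) \<rho> \<alpha> = (frc a \<rho> \<alpha> \<and> frc b \<rho> \<alpha>)"
| "frc (Dj a b) \<rho> \<alpha> = (\<forall>P\<in>thru \<alpha>. \<exists>\<beta>\<in>P. frc a \<rho> \<beta> \<or> frc b \<rho> \<beta>)"
| "frc (Im a b) \<rho> \<alpha> = (\<forall>\<beta>\<in>M. prec \<beta> \<alpha> \<longrightarrow> frc a \<rho> \<beta> \<longrightarrow> frc b \<rho> \<beta>)"
| "frc (AllN i a) \<rho> \<alpha> = (\<forall>c. frc a (updN \<rho> i c) \<alpha>)"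
| "frc (ExN i a) \<rho> \<alpha> = (\<forall>P\<in>thru \<alpha>. \<exists>\<beta>\<in>P. \<exists>c. frc a (updN \<rho> i c) \<beta>)"
| "frc (AllF k n i a) \<rho> \<alpha> = (\<forall>c\<in>Dom k n. frc a (updF \<rho> k n i c) \<alpha>)"
| "frc (ExF k n i a) \<rho> \<alpha> = (\<forall>P\<in>thru \<alpha>. \<exists>\<beta>\<in>P. \<exists>c\<in>Dom k n. frc a (updF \<rho> k n i c) \<beta>)"
| "frc (Prv t a) \<rho> \<alpha> = (\<forall>P\<in>thru \<alpha>. \<exists>\<beta>\<in>P.
      (case evT \<rho> \<beta> t of None \<Rightarrow> False
       | Some m \<Rightarrow> (\<exists>\<gamma>\<in>M. prec \<beta> \<gamma> \<and> length (hd \<gamma>) = m \<and> frc a \<rho> \<gamma>)))"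

definition envOK :: "'u env \<Rightarrow> bool" where
  "envOK \<rho> \<longleftrightarrow> (\<forall>k n i. 1 \<le> n \<and> n \<le> s \<longrightarrow> snd \<rho> k n i \<in> Dom k n)"

definition forces_closure :: "frm \<Rightarrow> bool" where
  "forces_closure \<phi> \<longleftrightarrow> (\<forall>\<rho>. envOK \<rho> \<longrightarrow> frc \<phi> \<rho> root)"

end

end

theory Submission
  imports Defs
begin

definition lh :: "'a list list \<Rightarrow> nat" where "lh x = length (hd x)"

lemma DD_iff:
  assumes "As \<noteq> []"
  shows "x \<in> DD As \<longleftrightarrow> length x = length As \<and> (\<forall>i<length As. length (x!i) = lh x \<and> set (x!i) \<subseteq> As!i)"
proof
  assume "x \<in> DD As"
  then obtain m where "length x = length As" "\<forall>i<length As. length (x ! i) = m \<and> set (x ! i) \<subseteq> As ! i"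
    unfolding DD_def by auto
  moreover have "lh x = m" using calculation assms unfolding lh_def
    by (metis hd_conv_nth length_greater_0_conv list.size(3))
  ultimately show "length x = length As \<and> (\<forall>i<length As. length (x!i) = lh x \<and> set (x!i) \<subseteq> As!i)" by auto
qed (auto simp: DD_def)

lemma prec_refl: "prec x x" by (simp add: prec_def)
lemma prec_trans: "prec z y \<Longrightarrow> prec y x \<Longrightarrow> prec z x"
  unfolding prec_def by (metis prefix_order.order_trans)

lemma prefix_take_take: "a \<le> b \<Longrightarrow> prefix (take a l) (take b l)"
  by (metis min.absorb1 take_is_prefix take_take)

lemma prec_lh:
  assumes "As \<noteq> []" "x \<in> DD As" "y \<in> DD As" "prec y x" shows "lh x \<le> lh y"
proof -
  have "0 < length As" using assms by simp
  then have "prefix (x!0) (y!0)" using assms(2-4) by (auto simp: prec_def DD_iff)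
  then have "length (x!0) \<le> length (y!0)" by (rule prefix_length_le)
  then show ?thesis using assms \<open>0 < length As\<close> by (auto simp: DD_iff)
qed

lemma prec_take:
  assumes "As \<noteq> []" "x \<in> DD As" "y \<in> DD As" "prec y x" shows "x = map (take (lh x)) y"
proof (rule nth_equalityI)
  show "length x = length (map (take (lh x)) y)" using assms by (auto simp: DD_iff)
  fix i assume "i < length x"
  then have "prefix (x!i) (y!i)" "length (x!i) = lh x" "i < length y" using assms by (auto simp: prec_def DD_iff)
  then show "x ! i = map (take (lh x)) y ! i"
    by (metis append_eq_conv_conj nth_map prefix_def)
qed

lemma prec_eq:
  assumes "As \<noteq> []" "x \<in> DD As" "y \<in> DD As" "prec y x" "lh x = lh y" shows "x = y"
proof -
  have "x = map (take (lh y)) y" using prec_take[OF assms(1-4)] assms(5) by simp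
  also have "\<dots> = y" using assms(1,3) by (auto intro!: nth_equalityI simp: DD_iff)
  finally show ?thesis .
qed

lemma prec_of_take:
  assumes "As \<noteq> []" "y \<in> DD As" "l \<le> lh y"
  shows "map (take l) y \<in> DD As" "prec y (map (take l) y)" "lh (map (take l) y) = l"
proof -
  have len: "length y = length As" "\<forall>i<length As. length (y!i) = lh y \<and> set (y!i) \<subseteq> As!i"
    using assms by (auto simp: DD_iff)
  have lhm: "lh (map (take l) y) = l" using len assms unfolding lh_def
    by (metis hd_conv_nth hd_map length_greater_0_conv lh_def list.map_disc_iff min.absorb2 length_take)
  show "lh (map (take l) y) = l" by fact
  show "map (take l) y \<in> DD As" using len assms lhm unfolding DD_iff[OF assms(1)]
    by (auto dest: in_set_takeD)
  show "prec y (map (take l) y)" using len by (auto simp: prec_def take_is_prefix)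
qed

lemma prec_lin:
  assumes "As \<noteq> []" "x \<in> DD As" "x' \<in> DD As" "y \<in> DD As" "prec y x" "prec y x'"
  shows "prec x x' \<or> prec x' x"
proof -
  have e1: "x = map (take (lh x)) y" and e2: "x' = map (take (lh x')) y" using prec_take assms by blast+
  show ?thesis
  proof (cases "lh x \<le> lh x'")
    case True
    then have "prec x' x" by (subst e1, subst e2) (auto simp: prec_def prefix_take_take)
    then show ?thesis ..
  next
    case False
    then have "prec x x'" by (subst e1, subst e2) (auto simp: prec_def prefix_take_take)
    then show ?thesis ..
  qed
qed


lemma root_DD: "As \<noteq> [] \<Longrightarrow> replicate (length As) [] \<in> DD As"
  by (auto simp: DD_def)

lemma prec_root: "As \<noteq> [] \<Longrightarrow> y \<in> DD As \<Longrightarrow> prec y (replicate (length As) [])"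
  by (auto simp: prec_def DD_def)

lemma ext_node:
  assumes "As \<noteq> []" "\<forall>i<length As. As!i \<noteq> {}" "y \<in> DD As"
  shows "\<exists>y'\<in>DD As. prec y' y \<and> lh y' = Suc (lh y)"
proof -
  define p where "p i = (SOME a. a \<in> As!i)" for i
  have p: "i < length As \<Longrightarrow> p i \<in> As!i" for i using assms(2) unfolding p_def by (simp add: some_in_eq)
  define y' where "y' = map (\<lambda>i. y!i @ [p i]) [0..<length y]"
  have len: "length y = length As" "\<forall>i<length As. length (y!i) = lh y \<and> set (y!i) \<subseteq> As!i"
    using assms by (auto simp: DD_iff)
  have lhy': "lh y' = Suc (lh y)" unfolding y'_def lh_def using len assms(1)
    by (simp add: hd_map lh_def hd_conv_nth)
  have "y' \<in> DD As" unfolding DD_iff[OF assms(1)] lhy' using len p by (auto simp: y'_def)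
  moreover have "prec y' y" using len by (auto simp: y'_def prec_def)
  ultimately show ?thesis using lhy' by blast
qed

lemma linset_insert: "linset r (insert a Q) \<longleftrightarrow> r a a \<and> (\<forall>x\<in>Q. r a x \<or> r x a) \<and> linset r Q"
  unfolding linset_def by blast

lemma path_sub: "is_path S r P \<Longrightarrow> P \<subseteq> S" by (simp add: is_path_def)
lemma path_lin: "is_path S r P \<Longrightarrow> x \<in> P \<Longrightarrow> y \<in> P \<Longrightarrow> r x y \<or> r y x" by (simp add: is_path_def linset_def)

lemma path_ins:
  assumes "is_path S r P" "a \<in> S" "r a a" "\<forall>x\<in>P. r a x \<or> r x a" shows "a \<in> P"
proof -
  have "insert a P = P" using assms unfolding is_path_def
    by (metis insert_subset linset_insert subset_insertI)
  then show ?thesis by blast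
qed

lemma path_closed:
  assumes "As \<noteq> []" "is_path (DD As) prec P" "y \<in> P" "x \<in> DD As" "prec y x"
  shows "x \<in> P"
proof (rule path_ins[OF assms(2,4) prec_refl], intro ballI)
  fix e assume e: "e \<in> P"
  have eD: "e \<in> DD As" "y \<in> DD As" using e assms path_sub by blast+
  from path_lin[OF assms(2) e assms(3)] show "prec x e \<or> prec e x"
  proof
    assume "prec e y" then show ?thesis using assms(5) prec_trans by blast
  next
    assume "prec y e" then show ?thesis using prec_lin[OF assms(1) assms(4) eD(1) eD(2) assms(5)] by blast
  qed
qed

lemma path_nonempty:
  assumes "As \<noteq> []" "is_path (DD As) prec P" shows "replicate (length As) [] \<in> P"
  using path_ins[OF assms(2) root_DD[OF assms(1)] prec_refl] prec_root[OF assms(1)] path_sub[OF assms(2)]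
  by blast

lemma path_lh_ge:
  assumes "As \<noteq> []" "\<forall>i<length As. As!i \<noteq> {}" "is_path (DD As) prec P"
  shows "\<exists>x\<in>P. m \<le> lh x"
proof (rule ccontr)
  assume "\<not> ?thesis"
  then have small: "\<forall>x\<in>P. lh x < m" by auto
  have PD: "P \<subseteq> DD As" using assms path_sub by blast
  have inj: "inj_on lh P"
  proof
    fix x y assume "x \<in> P" "y \<in> P" "lh x = lh y"
    moreover have "x \<in> DD As" "y \<in> DD As" using PD calculation by auto
    ultimately show "x = y" using path_lin[OF assms(3)] prec_eq[OF assms(1)] by metis
  qed
  have "lh ` P \<subseteq> {..<m}" using small by auto
  then have fin: "finite P" using inj finite_lessThan finite_subset finite_imageD by blast
  have ne: "P \<noteq> {}" using path_nonempty[OF assms(1,3)] by blast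
  have fl: "finite (lh ` P)" "lh ` P \<noteq> {}" using fin ne by auto
  obtain x where x0: "x \<in> P" "lh x = Max (lh ` P)" using Max_in[OF fl] by (auto simp: image_iff)
  have x: "x \<in> P" "\<forall>z\<in>P. lh z \<le> lh x" using x0 fl(1) by auto
  obtain x' where x': "x' \<in> DD As" "prec x' x" "lh x' = Suc (lh x)" using ext_node[OF assms(1,2)] x PD by blast
  have "x' \<in> P"
  proof (rule path_ins[OF assms(3) x'(1) prec_refl], intro ballI)
    fix e assume e: "e \<in> P"
    from path_lin[OF assms(3) e x(1)] show "prec x' e \<or> prec e x'"
    proof
      assume "prec e x"
      moreover have "e \<in> DD As" "x \<in> DD As" using e x PD by auto
      ultimately have "lh x \<le> lh e" using prec_lh[OF assms(1)] by blast
      then have "lh e = lh x" using x e by (simp add: le_antisym)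
      then have "e = x" using prec_eq[OF assms(1)] \<open>prec e x\<close> \<open>e \<in> DD As\<close> \<open>x \<in> DD As\<close> by metis
      then show ?thesis using x' by auto
    next
      assume "prec x e" then show ?thesis using x' prec_trans by blast
    qed
  qed
  then show False using x x' by fastforce
qed

lemma path_lh:
  assumes "As \<noteq> []" "\<forall>i<length As. As!i \<noteq> {}" "is_path (DD As) prec P"
  shows "\<exists>x\<in>P. lh x = m"
proof -
  obtain y where y: "y \<in> P" "m \<le> lh y" using path_lh_ge[OF assms] by blast
  have yD: "y \<in> DD As" using y assms path_sub by blast
  have "map (take m) y \<in> P" using path_closed[OF assms(1,3) y(1)] prec_of_take[OF assms(1) yD y(2)] by blast
  then show ?thesis using prec_of_take[OF assms(1) yD y(2)] by blast
qed

lemma path_image: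
  assumes P: "is_path S r P" and hS: "\<And>x. x\<in>S \<Longrightarrow> h x \<in> S" and h'S: "\<And>x. x\<in>S \<Longrightarrow> h' x \<in> S"
    and hh': "\<And>x. x\<in>S \<Longrightarrow> h (h' x) = x" and h'h: "\<And>x. x\<in>S \<Longrightarrow> h' (h x) = x"
    and hr: "\<And>x y. x\<in>S \<Longrightarrow> y\<in>S \<Longrightarrow> r x y \<Longrightarrow> r (h x) (h y)"
    and h'r: "\<And>x y. x\<in>S \<Longrightarrow> y\<in>S \<Longrightarrow> r x y \<Longrightarrow> r (h' x) (h' y)"
  shows "is_path S r (h ` P)"
  unfolding is_path_def
proof (intro conjI allI impI)
  have PS: "P \<subseteq> S" using P path_sub by blast
  show "h ` P \<subseteq> S" using PS hS by auto
  show "linset r (h ` P)" unfolding linset_def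
  proof (intro ballI)
    fix a b assume "a \<in> h ` P" "b \<in> h ` P"
    then obtain x y where xy: "x \<in> P" "y \<in> P" "a = h x" "b = h y" by blast
    have "r x y \<or> r y x" using path_lin[OF P xy(1,2)] .
    moreover have "x \<in> S" "y \<in> S" using xy PS by auto
    ultimately show "r a b \<or> r b a" using hr xy(3,4) by metis
  qed
  fix Q assume Q: "Q \<subseteq> S \<and> linset r Q \<and> h ` P \<subseteq> Q"
  have "h' ` Q \<subseteq> S" using Q h'S by auto
  moreover have "linset r (h' ` Q)" unfolding linset_def
  proof (intro ballI)
    fix a b assume "a \<in> h' ` Q" "b \<in> h' ` Q"
    then obtain x y where xy: "x \<in> Q" "y \<in> Q" "a = h' x" "b = h' y" by blast
    have "r x y \<or> r y x" using Q xy unfolding linset_def by blast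
    moreover have "x \<in> S" "y \<in> S" using xy Q by auto
    ultimately show "r a b \<or> r b a" using h'r xy(3,4) by metis
  qed
  moreover have "P \<subseteq> h' ` Q"
  proof
    fix x assume x: "x \<in> P"
    then have "h x \<in> Q" using Q by auto
    moreover have "h' (h x) = x" using x PS h'h by auto
    ultimately show "x \<in> h' ` Q" by (metis imageI)
  qed
  ultimately have e: "h' ` Q = P" using P Q unfolding is_path_def by blast
  show "Q = h ` P"
  proof
    show "Q \<subseteq> h ` P"
    proof
      fix q assume q: "q \<in> Q"
      then have "h' q \<in> P" using e by auto
      moreover have "h (h' q) = q" using q Q hh' by auto
      ultimately show "q \<in> h ` P" by (metis imageI)
    qed
  qed (use Q in blast)
qed


locale bm = beth num enc s for num :: "nat \<Rightarrow> 'u" and enc and s +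
  assumes s1: "1 \<le> s" and injn: "inj num" and inje: "inj_on enc Univ"
begin

lemma length_As[simp]: "length (As k) = Suc k"
  by (induction k) auto

lemma As_ne[simp]: "As k \<noteq> []"
  using length_As[of k] by (metis length_0_conv nat.distinct(1))

lemma As_nth0: "i \<le> k \<Longrightarrow> As k ! i = As i ! i"
proof (induction k)
  case (Suc k)
  then show ?case by (cases "i = Suc k") (auto simp: nth_append)
qed simp

lemma As_nth: "i \<le> k \<Longrightarrow> As k ! i = A i"
  unfolding A_def by (rule As_nth0)

lemma last_As: "last (As k) = A k"
  by (simp add: last_conv_nth As_nth)

lemma A0: "A 0 = range num" by (simp add: A_def)
lemma A_Suc: "A (Suc k) = enc ` Raw (As k)"
  by (simp add: A_def nth_append)

lemma As_take: "j \<le> k \<Longrightarrow> take (Suc j) (As k) = As j"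
proof (induction k)
  case (Suc k)
  then show ?case by (cases "j = Suc k") auto
qed simp

lemma D_As: "D k = DD (As k)" by (simp add: D_def)

lemma DD_As_iff: "x \<in> DD (As k) \<longleftrightarrow> length x = Suc k \<and> (\<forall>i\<le>k. length (x!i) = lh x \<and> set (x!i) \<subseteq> A i)"
  by (auto simp: DD_iff As_nth less_Suc_eq_le)

lemma last_node: "x \<in> DD (As k) \<Longrightarrow> last x = x ! k"
  by (metis DD_As_iff diff_Suc_1 last_conv_nth list.size(3) nat.distinct(1))

lemma RawI:
  assumes "\<And>x n. x \<notin> DD Bs \<Longrightarrow> f (x, n) = None"
    "\<And>x n v. f (x, n) = Some v \<Longrightarrow> v \<in> last Bs"
    "\<And>x y n v. x \<in> DD Bs \<Longrightarrow> y \<in> DD Bs \<Longrightarrow> prec y x \<Longrightarrow> f (x, n) = Some v \<Longrightarrow> f (y, n) = Some v"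
    "\<And>P n. is_path (DD Bs) prec P \<Longrightarrow> \<exists>x\<in>P. f (x, n) \<noteq> None"
  shows "f \<in> Raw Bs"
  using assms unfolding Raw_def by blast

lemma RawD:
  assumes "f \<in> Raw Bs"
  shows "\<And>x n. x \<notin> DD Bs \<Longrightarrow> f (x, n) = None"
    "\<And>x n v. f (x, n) = Some v \<Longrightarrow> v \<in> last Bs"
    "\<And>x y n v. x \<in> DD Bs \<Longrightarrow> y \<in> DD Bs \<Longrightarrow> prec y x \<Longrightarrow> f (x, n) = Some v \<Longrightarrow> f (y, n) = Some v"
    "\<And>P n. is_path (DD Bs) prec P \<Longrightarrow> \<exists>x\<in>P. f (x, n) \<noteq> None"
  using assms unfolding Raw_def by blast+

lemma Kc_A: "Kc k \<in> A k"
proof (induction k)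
  case 0 then show ?case by (simp add: A0)
next
  case (Suc k)
  have "(\<lambda>(x, m). if x \<in> D k then Some (Kc k) else None) \<in> Raw (As k)"
  proof (rule RawI)
    fix P n assume "is_path (DD (As k)) prec P"
    then have "replicate (length (As k)) [] \<in> P" by (rule path_nonempty[OF As_ne])
    moreover have "replicate (length (As k)) [] \<in> D k" using root_DD[OF As_ne] by (simp add: D_As)
    ultimately show "\<exists>x\<in>P. (\<lambda>(x, m). if x \<in> D k then Some (Kc k) else None) (x, n) \<noteq> None" by auto
  qed (use Suc in \<open>auto simp: D_As last_As split: if_splits\<close>)
  then show ?case by (simp add: A_Suc)
qed

lemma A_ne: "A k \<noteq> {}" using Kc_A by blast

lemma As_comp_ne: "\<forall>i<length (As k). As k ! i \<noteq> {}"
  by (simp add: As_nth A_ne less_Suc_eq_le)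

lemma Raw_Univ: "1 \<le> k \<Longrightarrow> k \<le> s \<Longrightarrow> Raw (As (k - 1)) \<subseteq> Univ"
  unfolding Univ_def by auto
lemma LRaw_Univ: "1 \<le> k \<Longrightarrow> k \<le> s \<Longrightarrow> LRaw (As (k - 1)) \<subseteq> Univ"
  unfolding Univ_def by auto

lemma dec_enc: "f \<in> Univ \<Longrightarrow> dec (enc f) = f"
  unfolding dec_def by (rule inv_into_f_f[OF inje])

lemma A_dec:
  assumes "1 \<le> k" "k \<le> s" "u \<in> A k"
  shows "dec u \<in> Raw (As (k - 1))" "enc (dec u) = u"
proof -
  obtain j where j: "k = Suc j" using assms by (cases k) auto
  obtain f where f: "f \<in> Raw (As j)" "u = enc f" using assms(3) by (auto simp: j A_Suc)
  have "f \<in> Univ" using Raw_Univ[OF assms(1,2)] f j by auto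
  then show "dec u \<in> Raw (As (k - 1))" "enc (dec u) = u" using f j dec_enc by auto
qed

lemma path_lh_As: "is_path (DD (As k)) prec P \<Longrightarrow> \<exists>x\<in>P. lh x = m"
  by (rule path_lh[OF As_ne As_comp_ne])

lemma LRaw_Raw: "LRaw (As k) \<subseteq> Raw (As k)"
proof
  fix f assume "f \<in> LRaw (As k)"
  then obtain \<xi> where xi: "\<forall>n. bij_betw (\<xi> n) (last (As k)) (last (As k))"
    and f: "f = (\<lambda>(x, n). if x \<in> DD (As k) \<and> n < length (hd x) then Some (\<xi> n (last x ! n)) else None)"
    unfolding LRaw_def by blast
  show "f \<in> Raw (As k)"
  proof (rule RawI)
    fix x n v assume "f (x, n) = Some v"
    then have xD: "x \<in> DD (As k)" "n < lh x" "v = \<xi> n (last x ! n)" by (auto simp: f lh_def split: if_splits)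
    have "last x ! n \<in> A k"
    proof -
      have "length x = Suc k" "length (x!k) = lh x" "set (x!k) \<subseteq> A k" using xD by (auto simp: DD_As_iff)
      moreover have "last x = x ! k" using \<open>length x = Suc k\<close> by (metis diff_Suc_1 last_conv_nth list.size(3) nat.distinct(1))
      ultimately show ?thesis using xD(2) by (metis nth_mem subsetD)
    qed
    then show "v \<in> last (As k)" using xi xD by (auto simp: last_As bij_betw_def)
  next
    fix x y n v assume a: "x \<in> DD (As k)" "y \<in> DD (As k)" "prec y x" "f (x, n) = Some v"
    then have n: "n < lh x" by (auto simp: f lh_def split: if_splits)
    have "lh x \<le> lh y" using prec_lh[OF As_ne a(1-3)] .
    moreover have "last y ! n = last x ! n"
    proof -
      have "prefix (x!k) (y!k)" using a(3) a(1,2) by (auto simp: prec_def DD_As_iff)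
      then have "prefix (last x) (last y)" using a(1,2) last_node by metis
      moreover have "n < length (last x)" using a(1) n last_node[OF a(1)] by (auto simp: DD_As_iff)
      ultimately show ?thesis by (metis nth_append prefix_def)
    qed
    ultimately show "f (y, n) = Some v" using a n by (auto simp: f lh_def)
  next
    fix P n assume "is_path (DD (As k)) prec P"
    then obtain x where "x \<in> P" "lh x = Suc n" using path_lh_As by blast
    moreover have "x \<in> DD (As k)" using calculation \<open>is_path _ _ P\<close> path_sub by blast
    ultimately show "\<exists>x\<in>P. f (x, n) \<noteq> None" by (auto simp: f lh_def)
  qed (auto simp: f)
qed

lemma L_A: "1 \<le> k \<Longrightarrow> L k \<subseteq> A k"
  using LRaw_Raw by (cases k) (auto simp: L_def A_Suc)
lemma B_A: "1 \<le> k \<Longrightarrow> B k \<subseteq> A k"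
  by (cases k) (auto simp: B_def A_Suc)

lemma Dom_A: "1 \<le> m \<Longrightarrow> Dom k m \<subseteq> A m"
  using L_A B_A by (cases k) (auto simp: A_def)

end

context bm begin

lemma M_As: "M = DD (As (s - 1))" by (simp add: M_def D_As)

lemma root_As: "root = replicate (length (As (s - 1))) []"
  using s1 by (simp add: root_def)

lemma root_M: "root \<in> M" using root_DD[OF As_ne] by (simp add: M_As root_As)
lemma prec_rootM: "\<alpha> \<in> M \<Longrightarrow> prec \<alpha> root"
  using prec_root[OF As_ne] by (simp add: M_As root_As)

lemma node_len: "x \<in> DD (As k) \<Longrightarrow> length x = Suc k" by (simp add: DD_As_iff)
lemma M_len: "x \<in> M \<Longrightarrow> length x = s" using s1 by (simp add: M_As DD_As_iff)

lemma take_node: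
  assumes "x \<in> DD (As k)" "j \<le> k"
  shows "take (Suc j) x \<in> DD (As j)" "lh (take (Suc j) x) = lh x"
proof -
  have "x \<noteq> []" using node_len[OF assms(1)] by auto
  then have "lh (take (Suc j) x) = lh x" unfolding lh_def by (cases x) auto
  then show "take (Suc j) x \<in> DD (As j)" using assms by (auto simp: DD_As_iff)
  show "lh (take (Suc j) x) = lh x" by fact
qed

lemma take_prec: "prec y x \<Longrightarrow> prec (take j y) (take j x)"
  by (auto simp: prec_def)

lemma proj_path:
  assumes P: "is_path (DD (As k)) prec P" and j: "j \<le> k"
  shows "is_path (DD (As j)) prec (take (Suc j) ` P)"
  unfolding is_path_def
proof (intro conjI allI impI)
  have PS: "P \<subseteq> DD (As k)" using P path_sub by blast
  show "take (Suc j) ` P \<subseteq> DD (As j)" using PS take_node[OF _ j] by auto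
  show "linset prec (take (Suc j) ` P)" unfolding linset_def
  proof (intro ballI)
    fix a b assume "a \<in> take (Suc j) ` P" "b \<in> take (Suc j) ` P"
    then obtain x y where "x \<in> P" "y \<in> P" "a = take (Suc j) x" "b = take (Suc j) y" by blast
    then show "prec a b \<or> prec b a" using path_lin[OF P] take_prec by metis
  qed
  fix Q assume Q: "Q \<subseteq> DD (As j) \<and> linset prec Q \<and> take (Suc j) ` P \<subseteq> Q"
  show "Q = take (Suc j) ` P"
  proof
    show "Q \<subseteq> take (Suc j) ` P"
    proof
      fix q assume q: "q \<in> Q"
      obtain e where e: "e \<in> P" "lh e = lh q" using path_lh_As[OF P] by blast
      have eD: "e \<in> DD (As k)" using e PS by auto
      have te: "take (Suc j) e \<in> Q" using Q e by auto
      have "prec q (take (Suc j) e) \<or> prec (take (Suc j) e) q" using Q q te unfolding linset_def by blast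
      moreover have "lh (take (Suc j) e) = lh q" using take_node[OF eD j] e by simp
      moreover have "q \<in> DD (As j)" "take (Suc j) e \<in> DD (As j)" using Q q te by auto
      ultimately have "q = take (Suc j) e" using prec_eq[OF As_ne] by metis
      then show "q \<in> take (Suc j) ` P" using e by blast
    qed
  qed (use Q in blast)
qed

lemma Sop_A: "k \<le> s \<Longrightarrow> u \<in> A k \<Longrightarrow> Sop k u \<in> A k"
proof (induction k arbitrary: u)
  case 0 then show ?case by (simp add: A0)
next
  case (Suc k)
  have f: "dec u \<in> Raw (As k)" using A_dec[of "Suc k" u] Suc.prems by auto
  have "(\<lambda>p. map_option (Sop k) (dec u p)) \<in> Raw (As k)"
  proof (rule RawI)
    fix x n v assume "map_option (Sop k) (dec u (x, n)) = Some v"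
    then obtain w where "dec u (x, n) = Some w" "v = Sop k w" by auto
    then show "v \<in> last (As k)" using RawD(2)[OF f] Suc by (auto simp: last_As)
  next
    fix x y n v assume "x \<in> DD (As k)" "y \<in> DD (As k)" "prec y x" "map_option (Sop k) (dec u (x, n)) = Some v"
    then show "map_option (Sop k) (dec u (y, n)) = Some v" using RawD(3)[OF f] by fastforce
  next
    fix P n assume "is_path (DD (As k)) prec P"
    then show "\<exists>x\<in>P. map_option (Sop k) (dec u (x, n)) \<noteq> None" using RawD(4)[OF f] by auto
  qed (use RawD(1)[OF f] in auto)
  then show ?case by (simp add: A_Suc)
qed

lemma wf_ty0: "wfT s t \<Longrightarrow> True" "wfF s Z \<Longrightarrow> 1 \<le> ty Z \<and> ty Z \<le> s"
  by (induction t and Z) auto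
lemma wf_ty: "wfF s Z \<Longrightarrow> 1 \<le> ty Z \<and> ty Z \<le> s" using wf_ty0(2) .

lemma evF_A:
  assumes "envOK \<rho>" "\<alpha> \<in> M"
  shows "wfT s t \<Longrightarrow> True" "wfF s Z \<Longrightarrow> evF \<rho> \<alpha> Z = Some v \<Longrightarrow> v \<in> A (ty Z)"
proof (induction t and Z arbitrary: and v)
  case (FV k n i)
  then have n: "1 \<le> n" "n \<le> s" "v = snd \<rho> k n i" by auto
  then have "snd \<rho> k n i \<in> Dom k n" using assms(1) unfolding envOK_def by blast
  then show ?case using n Dom_A[OF n(1)] by auto
next
  case (KC n) then show ?case using Kc_A by auto
next
  case (NS Z)
  then obtain w where w: "evF \<rho> \<alpha> Z = Some w" "v = Sop (ty Z) w" by auto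
  have "wfF s Z" using NS.prems by simp
  then have "w \<in> A (ty Z)" "ty Z \<le> s" using NS.IH w wf_ty by blast+
  then show ?case using Sop_A w by simp
next
  case (ApF Z t)
  obtain f m where f: "evF \<rho> \<alpha> Z = Some f" "evT \<rho> \<alpha> t = Some m" "dec f (take (ty Z) \<alpha>, m) = Some v"
  proof (cases "evF \<rho> \<alpha> Z")
    case None then show ?thesis using ApF.prems(2) by simp
  next
    case (Some f)
    show ?thesis
    proof (cases "evT \<rho> \<alpha> t")
      case None then show ?thesis using ApF.prems(2) Some by simp
    next
      case (Some m) then show ?thesis using ApF.prems(2) \<open>evF \<rho> \<alpha> Z = Some f\<close> that by simp
    qed
  qed
  have wz: "wfF s Z" "2 \<le> ty Z" using ApF.prems(1) by auto
  have "f \<in> A (ty Z)" using ApF.IH(1)[OF wz(1) f(1)] .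
  moreover have "1 \<le> ty Z" "ty Z \<le> s" using wz wf_ty by auto
  ultimately have "dec f \<in> Raw (As (ty Z - 1))" using A_dec(1) by simp
  then have "v \<in> last (As (ty Z - 1))" using f(3) by (rule RawD(2))
  then show ?case by (simp add: last_As)
qed (rule TrueI)+

end

definition mp :: "(nat \<Rightarrow> 'a \<Rightarrow> 'a) \<Rightarrow> 'a list \<Rightarrow> 'a list" where
  "mp \<sigma> l = map (\<lambda>i. \<sigma> i (l ! i)) [0..<length l]"

lemma mp_len[simp]: "length (mp \<sigma> l) = length l" by (simp add: mp_def)
lemma mp_nth[simp]: "i < length l \<Longrightarrow> mp \<sigma> l ! i = \<sigma> i (l ! i)" by (simp add: mp_def)
lemma mp_inv: "(\<And>y e. \<tau> y (\<sigma> y e) = e) \<Longrightarrow> mp \<tau> (mp \<sigma> l) = l"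
  by (rule nth_equalityI) auto
lemma mp_prefix: "prefix l l' \<Longrightarrow> prefix (mp \<sigma> l) (mp \<sigma> l')"
proof -
  assume "prefix l l'"
  then have "length l \<le> length l'" "\<forall>i<length l. l ! i = l' ! i"
    by (auto simp: prefix_def nth_append)
  then have "mp \<sigma> l = take (length l) (mp \<sigma> l')" by (auto intro!: nth_equalityI)
  then show ?thesis by (simp add: take_is_prefix)
qed
lemma mp_Nil[simp]: "mp \<sigma> [] = []" by (simp add: mp_def)

locale bm2 = bm num enc s for num :: "nat \<Rightarrow> 'u" and enc and s +
  fixes n :: nat
  assumes n1: "1 \<le> n" and ns: "n \<le> s"
begin

definition Tn :: "(nat \<Rightarrow> 'u \<Rightarrow> 'u) \<Rightarrow> 'u list list \<Rightarrow> 'u list list" where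
  "Tn \<sigma> x = x[n - 1 := mp \<sigma> (x ! (n - 1))]"

fun Pt :: "(nat \<Rightarrow> 'u \<Rightarrow> 'u) \<Rightarrow> nat \<Rightarrow> 'u \<Rightarrow> 'u" where
  "Pt \<tau> 0 u = u"
| "Pt \<tau> (Suc k) u = (if Suc k < n then u else enc (\<lambda>(x, m). map_option (Pt \<tau> k) (dec u (Tn \<tau> x, m))))"

definition goodp :: "(nat \<Rightarrow> 'u \<Rightarrow> 'u) \<Rightarrow> (nat \<Rightarrow> 'u \<Rightarrow> 'u) \<Rightarrow> bool" where
  "goodp \<sigma> \<tau> \<longleftrightarrow> (\<forall>y e. \<tau> y (\<sigma> y e) = e) \<and> (\<forall>y e. \<sigma> y (\<tau> y e) = e)
     \<and> (\<forall>y. \<forall>e\<in>A (n - 1). \<sigma> y e \<in> A (n - 1)) \<and> (\<forall>y. \<forall>e\<in>A (n - 1). \<tau> y e \<in> A (n - 1))"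

lemma goodp_sym: "goodp \<sigma> \<tau> \<Longrightarrow> goodp \<tau> \<sigma>" unfolding goodp_def by blast

lemma Tn_len[simp]: "length (Tn \<sigma> x) = length x" by (simp add: Tn_def)

lemma Tn_nth: "i < length x \<Longrightarrow> Tn \<sigma> x ! i = (if i = n - 1 then mp \<sigma> (x ! i) else x ! i)"
  by (simp add: Tn_def)

lemma Tn_nth_len[simp]: "i < length x \<Longrightarrow> length (Tn \<sigma> x ! i) = length (x ! i)"
  by (simp add: Tn_nth)

lemma Tn_inv: "goodp \<sigma> \<tau> \<Longrightarrow> Tn \<tau> (Tn \<sigma> x) = x"
  by (rule nth_equalityI) (auto simp: Tn_nth goodp_def mp_inv)

lemma Tn_lh[simp]: "lh (Tn \<sigma> x) = lh x"
proof (cases x)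
  case Nil then show ?thesis by (simp add: Tn_def)
next
  case (Cons a l)
  then have "x \<noteq> []" by simp
  have "Tn \<sigma> x \<noteq> []"
  proof
    assume "Tn \<sigma> x = []"
    then have "length x = 0" using Tn_len[of \<sigma> x] by simp
    with \<open>x \<noteq> []\<close> show False by simp
  qed
  note this \<open>x \<noteq> []\<close>
  then have "hd (Tn \<sigma> x) = Tn \<sigma> x ! 0" "hd x = x ! 0" by (auto simp: hd_conv_nth)
  moreover have "0 < length x" using \<open>x \<noteq> []\<close> by simp
  ultimately show ?thesis unfolding lh_def by simp
qed

lemma Tn_short: "length x < n \<Longrightarrow> Tn \<sigma> x = x"
  unfolding Tn_def by (rule list_update_beyond) simp

lemma Tn_take: "take j (Tn \<sigma> x) = Tn \<sigma> (take j x)"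
proof (cases "j < n")
  case True
  then show ?thesis by (simp add: Tn_def list_update_beyond)
next
  case False
  then have "n - 1 < j" using n1 by simp
  then show ?thesis by (simp add: Tn_def take_update_swap)
qed

lemma Tn_DD: assumes "goodp \<sigma> \<tau>" "x \<in> DD (As k)" shows "Tn \<sigma> x \<in> DD (As k)"
  unfolding DD_As_iff
proof (intro conjI allI impI)
  have x: "length x = Suc k" "\<forall>i\<le>k. length (x!i) = lh x \<and> set (x!i) \<subseteq> A i" using assms(2) by (auto simp: DD_As_iff)
  show "length (Tn \<sigma> x) = Suc k" using x by simp
  fix i assume i: "i \<le> k"
  show "length (Tn \<sigma> x ! i) = lh (Tn \<sigma> x)" using x i by (simp add: less_Suc_eq_le)
  show "set (Tn \<sigma> x ! i) \<subseteq> A i"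
  proof (cases "i = n - 1")
    case True
    show ?thesis
    proof
      fix e assume "e \<in> set (Tn \<sigma> x ! i)"
      then obtain j where j: "j < length (x ! i)" "e = \<sigma> j (x ! i ! j)" using True x i
        by (auto simp: Tn_nth in_set_conv_nth)
      then have "x ! i ! j \<in> A i" using x i by (auto simp: subset_iff)
      then show "e \<in> A i" using assms(1) j True unfolding goodp_def by auto
    qed
  qed (use x i in \<open>auto simp: Tn_nth\<close>)
qed

lemma Tn_DD_iff: "goodp \<sigma> \<tau> \<Longrightarrow> Tn \<sigma> x \<in> DD (As k) \<longleftrightarrow> x \<in> DD (As k)"
  by (metis Tn_DD Tn_inv goodp_sym)

lemma Tn_prec: "prec y x \<Longrightarrow> prec (Tn \<sigma> y) (Tn \<sigma> x)"
  unfolding prec_def by (auto simp: Tn_nth mp_prefix)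

lemma Tn_prec_iff: "goodp \<sigma> \<tau> \<Longrightarrow> prec (Tn \<sigma> y) (Tn \<sigma> x) \<longleftrightarrow> prec y x"
  by (metis Tn_prec Tn_inv)

lemma Tn_M: "goodp \<sigma> \<tau> \<Longrightarrow> Tn \<sigma> x \<in> M \<longleftrightarrow> x \<in> M"
  by (simp add: M_As Tn_DD_iff)

lemma Tn_rep: "Tn \<sigma> (replicate j []) = replicate j []"
  by (rule nth_equalityI) (auto simp: Tn_nth)

lemma Tn_path: assumes "goodp \<sigma> \<tau>" "is_path (DD (As k)) prec P" shows "is_path (DD (As k)) prec (Tn \<sigma> ` P)"
proof (rule path_image[OF assms(2)])
  have g2: "goodp \<tau> \<sigma>" using goodp_sym[OF assms(1)] .
  show "\<And>x. x \<in> DD (As k) \<Longrightarrow> Tn \<sigma> x \<in> DD (As k)" using Tn_DD[OF assms(1)] .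
  show "\<And>x. x \<in> DD (As k) \<Longrightarrow> Tn \<tau> x \<in> DD (As k)" using Tn_DD[OF g2] .
  show "\<And>x. x \<in> DD (As k) \<Longrightarrow> Tn \<sigma> (Tn \<tau> x) = x" using Tn_inv[OF g2] by blast
  show "\<And>x. x \<in> DD (As k) \<Longrightarrow> Tn \<tau> (Tn \<sigma> x) = x" using Tn_inv[OF assms(1)] by blast
  show "\<And>x y. prec x y \<Longrightarrow> prec (Tn \<sigma> x) (Tn \<sigma> y)" by (rule Tn_prec)
  show "\<And>x y. prec x y \<Longrightarrow> prec (Tn \<tau> x) (Tn \<tau> y)" by (rule Tn_prec)
qed

lemma thru_Tn:
  assumes "goodp \<sigma> \<tau>"
  shows "thru (Tn \<sigma> \<alpha>) = (\<lambda>P. Tn \<sigma> ` P) ` thru \<alpha>"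
proof
  show "thru (Tn \<sigma> \<alpha>) \<subseteq> (\<lambda>P. Tn \<sigma> ` P) ` thru \<alpha>"
  proof
    fix P assume "P \<in> thru (Tn \<sigma> \<alpha>)"
    then have P: "is_path M prec P" "Tn \<sigma> \<alpha> \<in> P" by (auto simp: thru_def)
    have "is_path M prec (Tn \<tau> ` P)" using Tn_path[OF goodp_sym[OF assms]] P(1) by (simp add: M_As)
    moreover have "\<alpha> \<in> Tn \<tau> ` P" using P(2) Tn_inv[OF assms] by (metis imageI)
    moreover have "P = Tn \<sigma> ` (Tn \<tau> ` P)" using Tn_inv[OF goodp_sym[OF assms]] by (simp add: image_comp)
    ultimately show "P \<in> (\<lambda>P. Tn \<sigma> ` P) ` thru \<alpha>" by (auto simp: thru_def)
  qed
next
  show "(\<lambda>P. Tn \<sigma> ` P) ` thru \<alpha> \<subseteq> thru (Tn \<sigma> \<alpha>)"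
    using Tn_path[OF assms] by (auto simp: thru_def M_As)
qed

end

context bm begin

lemma Kc_raw: "(\<lambda>(x, m). if x \<in> D k then Some (Kc k) else None) \<in> Raw (As k)"
proof (rule RawI)
  fix P n assume "is_path (DD (As k)) prec P"
  then have "replicate (length (As k)) [] \<in> P" by (rule path_nonempty[OF As_ne])
  moreover have "replicate (length (As k)) [] \<in> D k" using root_DD[OF As_ne] by (simp add: D_As)
  ultimately show "\<exists>x\<in>P. (\<lambda>(x, m). if x \<in> D k then Some (Kc k) else None) (x, n) \<noteq> None" by auto
qed (use Kc_A in \<open>auto simp: D_As last_As split: if_splits\<close>)

lemma Sop_raw:
  assumes "Suc k \<le> s" "u \<in> A (Suc k)"
  shows "(\<lambda>p. map_option (Sop k) (dec u p)) \<in> Raw (As k)"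
proof -
  have f: "dec u \<in> Raw (As k)" using A_dec(1)[of "Suc k" u] assms by simp
  show ?thesis
  proof (rule RawI)
    fix x n v assume "map_option (Sop k) (dec u (x, n)) = Some v"
    then obtain w where w: "dec u (x, n) = Some w" "v = Sop k w" by auto
    have "w \<in> last (As k)" using f w(1) by (rule RawD(2))
    then show "v \<in> last (As k)" using Sop_A[of k w] assms w(2) by (simp add: last_As)
  next
    fix x y n v assume a: "x \<in> DD (As k)" "y \<in> DD (As k)" "prec y x" "map_option (Sop k) (dec u (x, n)) = Some v"
    then obtain w where w: "dec u (x, n) = Some w" "v = Sop k w" by auto
    have "dec u (y, n) = Some w" using RawD(3)[OF f a(1-3) w(1)] .
    then show "map_option (Sop k) (dec u (y, n)) = Some v" using w by simp
  next
    fix P n assume "is_path (DD (As k)) prec P"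
    then obtain x where "x \<in> P" "dec u (x, n) \<noteq> None" using RawD(4)[OF f] by blast
    then show "\<exists>x\<in>P. map_option (Sop k) (dec u (x, n)) \<noteq> None" by auto
  next
    fix x n assume "x \<notin> DD (As k)"
    then show "map_option (Sop k) (dec u (x, n)) = None" using RawD(1)[OF f] by simp
  qed
qed

end

context bm2 begin

lemma Pt_low: "k < n \<Longrightarrow> Pt \<tau> k u = u"
  by (cases k) auto

lemma Raw_transform:
  assumes f: "f \<in> Raw (As k)" and g: "goodp \<sigma> \<tau>" and Q: "\<And>v. v \<in> A k \<Longrightarrow> Q v \<in> A k"
  shows "(\<lambda>(x, m). map_option Q (f (Tn \<tau> x, m))) \<in> Raw (As k)"
proof (rule RawI)
  have g2: "goodp \<tau> \<sigma>" using goodp_sym[OF g] .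
  fix x n assume "x \<notin> DD (As k)"
  then have "Tn \<tau> x \<notin> DD (As k)" using Tn_DD_iff[OF g2] by simp
  then show "(\<lambda>(x, m). map_option Q (f (Tn \<tau> x, m))) (x, n) = None" using RawD(1)[OF f] by simp
next
  fix x n v assume "(\<lambda>(x, m). map_option Q (f (Tn \<tau> x, m))) (x, n) = Some v"
  then obtain w where w: "f (Tn \<tau> x, n) = Some w" "v = Q w" by auto
  have "w \<in> last (As k)" using f w(1) by (rule RawD(2))
  then show "v \<in> last (As k)" using Q w(2) by (simp add: last_As)
next
  have g2: "goodp \<tau> \<sigma>" using goodp_sym[OF g] .
  fix x y n v assume a: "x \<in> DD (As k)" "y \<in> DD (As k)" "prec y x"
    "(\<lambda>(x, m). map_option Q (f (Tn \<tau> x, m))) (x, n) = Some v"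
  then obtain w where w: "f (Tn \<tau> x, n) = Some w" "v = Q w" by auto
  have "Tn \<tau> x \<in> DD (As k)" "Tn \<tau> y \<in> DD (As k)" "prec (Tn \<tau> y) (Tn \<tau> x)"
    using a Tn_DD_iff[OF g2] Tn_prec by auto
  then have "f (Tn \<tau> y, n) = Some w" using RawD(3)[OF f] w(1) by blast
  then show "(\<lambda>(x, m). map_option Q (f (Tn \<tau> x, m))) (y, n) = Some v" using w by simp
next
  have g2: "goodp \<tau> \<sigma>" using goodp_sym[OF g] .
  fix P n assume "is_path (DD (As k)) prec P"
  then have "is_path (DD (As k)) prec (Tn \<tau> ` P)" by (rule Tn_path[OF g2])
  then obtain x' where "x' \<in> Tn \<tau> ` P" "f (x', n) \<noteq> None" using RawD(4)[OF f] by blast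
  then obtain x where "x \<in> P" "f (Tn \<tau> x, n) \<noteq> None" by blast
  then show "\<exists>x\<in>P. (\<lambda>(x, m). map_option Q (f (Tn \<tau> x, m))) (x, n) \<noteq> None" by auto
qed

lemma Pt_main: "k \<le> s \<Longrightarrow> \<forall>\<sigma> \<tau>. goodp \<sigma> \<tau> \<longrightarrow> (\<forall>u\<in>A k. Pt \<tau> k u \<in> A k \<and> Pt \<sigma> k (Pt \<tau> k u) = u)"
proof (induction k)
  case 0 then show ?case by simp
next
  case (Suc k)
  show ?case
  proof (intro allI impI ballI)
    fix \<sigma> \<tau> u assume g: "goodp \<sigma> \<tau>" and u: "u \<in> A (Suc k)"
    show "Pt \<tau> (Suc k) u \<in> A (Suc k) \<and> Pt \<sigma> (Suc k) (Pt \<tau> (Suc k) u) = u"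
    proof (cases "Suc k < n")
      case True then show ?thesis using u by simp
    next
      case False
      have IH: "\<And>v. v \<in> A k \<Longrightarrow> Pt \<tau> k v \<in> A k \<and> Pt \<sigma> k (Pt \<tau> k v) = v"
        using Suc g by auto
      have f: "dec u \<in> Raw (As k)" "enc (dec u) = u" using A_dec[of "Suc k" u] Suc.prems u by auto
      define f' where "f' = (\<lambda>(x, m). map_option (Pt \<tau> k) (dec u (Tn \<tau> x, m)))"
      have f'R: "f' \<in> Raw (As k)" unfolding f'_def using Raw_transform[OF f(1) g] IH by blast
      have P1: "Pt \<tau> (Suc k) u = enc f'" using False by (simp add: f'_def)
      then have "Pt \<tau> (Suc k) u \<in> A (Suc k)" using f'R by (simp add: A_Suc)
      moreover have "dec (enc f') = f'" using dec_enc Raw_Univ[of "Suc k"] Suc.prems f'R by auto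
      moreover have "(\<lambda>(x, m). map_option (Pt \<sigma> k) (f' (Tn \<sigma> x, m))) = dec u"
      proof (intro ext, clarify)
        fix x m
        have "f' (Tn \<sigma> x, m) = map_option (Pt \<tau> k) (dec u (x, m))" using Tn_inv[OF g] by (simp add: f'_def)
        moreover have "\<And>v. dec u (x, m) = Some v \<Longrightarrow> v \<in> A k" using RawD(2)[OF f(1)] by (simp add: last_As)
        ultimately show "map_option (Pt \<sigma> k) (f' (Tn \<sigma> x, m)) = dec u (x, m)" using IH
          by (cases "dec u (x, m)") auto
      qed
      ultimately show ?thesis using False P1 f(2) by simp
    qed
  qed
qed

lemma Pt_A: "goodp \<sigma> \<tau> \<Longrightarrow> k \<le> s \<Longrightarrow> u \<in> A k \<Longrightarrow> Pt \<tau> k u \<in> A k"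
  using Pt_main by blast
lemma Pt_inv: "goodp \<sigma> \<tau> \<Longrightarrow> k \<le> s \<Longrightarrow> u \<in> A k \<Longrightarrow> Pt \<sigma> k (Pt \<tau> k u) = u"
  using Pt_main by blast

lemma Pt_dec:
  assumes g: "goodp \<sigma> \<tau>" and k: "1 \<le> k" "k \<le> s" and u: "u \<in> A k" and x: "length x = k"
  shows "dec (Pt \<tau> k u) (Tn \<sigma> x, m) = map_option (Pt \<tau> (k - 1)) (dec u (x, m))"
proof -
  obtain j where j: "k = Suc j" using k by (cases k) auto
  show ?thesis
  proof (cases "Suc j < n")
    case True
    then have "Pt \<tau> j = (\<lambda>v. v)" using Pt_low by (intro ext) simp
    then show ?thesis using True j x Tn_short Pt_low by (simp add: option.map_ident)
  next
    case False
    have IH: "\<And>v. v \<in> A j \<Longrightarrow> Pt \<tau> j v \<in> A j" using Pt_A[OF g] k j by simp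
    have f: "dec u \<in> Raw (As j)" using A_dec[of k u] k u j by auto
    define f' where "f' = (\<lambda>(x, m). map_option (Pt \<tau> j) (dec u (Tn \<tau> x, m)))"
    have f'R: "f' \<in> Raw (As j)" unfolding f'_def using Raw_transform[OF f g] IH by blast
    have "Pt \<tau> k u = enc f'" using False j by (simp add: f'_def)
    moreover have "dec (enc f') = f'" using dec_enc Raw_Univ[of k] k j f'R by auto
    ultimately show ?thesis using Tn_inv[OF g] j by (simp add: f'_def)
  qed
qed

lemma Pt_Kc: "goodp \<sigma> \<tau> \<Longrightarrow> k \<le> s \<Longrightarrow> Pt \<tau> k (Kc k) = Kc k"
proof (induction k)
  case 0 then show ?case by simp
next
  case (Suc k)
  show ?case
  proof (cases "Suc k < n")
    case True then show ?thesis by simp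
  next
    case False
    define g :: "'u list list \<times> nat \<Rightarrow> 'u option" where "g = (\<lambda>(x, m). if x \<in> D k then Some (Kc k) else None)"
    have gR: "g \<in> Raw (As k)" unfolding g_def by (rule Kc_raw)
    have dg: "dec (Kc (Suc k)) = g" using dec_enc Raw_Univ[of "Suc k"] Suc.prems gR by (auto simp: g_def)
    have "(\<lambda>(x, m). map_option (Pt \<tau> k) (g (Tn \<tau> x, m))) = g"
      using Tn_DD_iff[OF goodp_sym[OF Suc.prems(1)]] Suc by (auto simp: g_def D_As)
    then show ?thesis using False dg by (simp add: g_def)
  qed
qed

lemma Pt_Sop: "goodp \<sigma> \<tau> \<Longrightarrow> k \<le> s \<Longrightarrow> u \<in> A k \<Longrightarrow> Pt \<tau> k (Sop k u) = Sop k (Pt \<tau> k u)"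
proof (induction k arbitrary: u)
  case 0 then show ?case by simp
next
  case (Suc k)
  show ?case
  proof (cases "Suc k < n")
    case True then show ?thesis by simp
  next
    case False
    have g: "goodp \<sigma> \<tau>" using Suc.prems by simp
    have IH: "\<And>v. v \<in> A k \<Longrightarrow> Pt \<tau> k v \<in> A k" using Pt_A[OF g] Suc.prems by simp
    have f: "dec u \<in> Raw (As k)" using A_dec[of "Suc k" u] Suc.prems by auto
    define h where "h = (\<lambda>p. map_option (Sop k) (dec u p))"
    have hR: "h \<in> Raw (As k)" unfolding h_def using Sop_raw Suc.prems by simp
    have dh: "dec (Sop (Suc k) u) = h" using dec_enc Raw_Univ[of "Suc k"] Suc.prems hR by (auto simp: h_def)
    define f' where "f' = (\<lambda>(x, m). map_option (Pt \<tau> k) (dec u (Tn \<tau> x, m)))"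
    have f'R: "f' \<in> Raw (As k)" unfolding f'_def using Raw_transform[OF f g] IH by blast
    have df': "dec (Pt \<tau> (Suc k) u) = f'" using dec_enc Raw_Univ[of "Suc k"] Suc.prems f'R False
      by (auto simp: f'_def)
    have "(\<lambda>(x, m). map_option (Pt \<tau> k) (h (Tn \<tau> x, m))) = (\<lambda>p. map_option (Sop k) (f' p))"
    proof (intro ext, clarify)
      fix x m
      have "\<And>v. dec u (Tn \<tau> x, m) = Some v \<Longrightarrow> v \<in> A k" using RawD(2)[OF f] by (simp add: last_As)
      then show "map_option (Pt \<tau> k) (h (Tn \<tau> x, m)) = map_option (Sop k) (f' (x, m))"
        using Suc.IH[OF g] Suc.prems(2) unfolding h_def f'_def by (cases "dec u (Tn \<tau> x, m)") auto
    qed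
    then show ?thesis using False dh df' by simp
  qed
qed

end

context bm2 begin

lemma bij_tau: "goodp \<sigma> \<tau> \<Longrightarrow> bij_betw (\<tau> m) (A (n - 1)) (A (n - 1))"
  unfolding goodp_def by (intro bij_betw_byWitness[where f'="\<sigma> m"]) auto

lemma bij_Pt: "goodp \<sigma> \<tau> \<Longrightarrow> j \<le> s \<Longrightarrow> bij_betw (Pt \<tau> j) (A j) (A j)"
  by (intro bij_betw_byWitness[where f'="Pt \<sigma> j"])
    (use Pt_inv Pt_A goodp_sym in \<open>blast\<close>)+

lemma LRaw_elim:
  assumes "f \<in> LRaw Bs"
  obtains \<xi> where "\<forall>n. bij_betw (\<xi> n) (last Bs) (last Bs)"
    "f = (\<lambda>(x, n). if x \<in> DD Bs \<and> n < length (hd x) then Some (\<xi> n (last x ! n)) else None)"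
  using assms unfolding LRaw_def by blast

lemma LRawI:
  assumes "\<forall>n. bij_betw (\<xi> n) (last Bs) (last Bs)"
  shows "(\<lambda>(x, n). if x \<in> DD Bs \<and> n < length (hd x) then Some (\<xi> n (last x ! n)) else None) \<in> LRaw Bs"
  using assms unfolding LRaw_def by blast

lemma Pt_L:
  assumes g: "goodp \<sigma> \<tau>" and k: "1 \<le> k" "k \<le> s" and c: "c \<in> L k"
  shows "Pt \<tau> k c \<in> L k"
proof -
  obtain j where j: "k = Suc j" using k by (cases k) auto
  obtain fL where fL: "fL \<in> LRaw (As j)" "c = enc fL" using c j by (auto simp: L_def)
  show ?thesis
  proof (cases "Suc j < n")
    case True then show ?thesis using c j by simp
  next
    case False
    then have jn: "n - 1 \<le> j" by simp
    obtain \<xi> where xi: "\<forall>m. bij_betw (\<xi> m) (last (As j)) (last (As j))"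
      and fLd: "fL = (\<lambda>(x, m). if x \<in> DD (As j) \<and> m < length (hd x) then Some (\<xi> m (last x ! m)) else None)"
      using LRaw_elim[OF fL(1)] by blast
    have dc: "dec c = fL" using fL dec_enc LRaw_Univ[of k] k j by auto
    define \<xi>' where "\<xi>' = (\<lambda>m e. Pt \<tau> j (\<xi> m (if j = n - 1 then \<tau> m e else e)))"
    have bij': "\<forall>m. bij_betw (\<xi>' m) (last (As j)) (last (As j))"
    proof
      fix m
      have b1: "bij_betw (\<xi> m) (A j) (A j)" using xi by (simp add: last_As)
      have b2: "bij_betw (Pt \<tau> j) (A j) (A j)" using bij_Pt[OF g] k j by simp
      show "bij_betw (\<xi>' m) (last (As j)) (last (As j))"
      proof (cases "j = n - 1")
        case True
        have "bij_betw (\<tau> m) (A j) (A j)" using bij_tau[OF g] True by simp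
        then have "bij_betw (Pt \<tau> j \<circ> (\<xi> m \<circ> \<tau> m)) (A j) (A j)" using b1 b2 bij_betw_trans by blast
        then show ?thesis using True by (simp add: \<xi>'_def last_As comp_def)
      next
        case False
        have "bij_betw (Pt \<tau> j \<circ> \<xi> m) (A j) (A j)" using b1 b2 bij_betw_trans by blast
        then show ?thesis using False by (simp add: \<xi>'_def last_As comp_def)
      qed
    qed
    have "(\<lambda>(x, m). map_option (Pt \<tau> j) (fL (Tn \<tau> x, m)))
        = (\<lambda>(x, m). if x \<in> DD (As j) \<and> m < length (hd x) then Some (\<xi>' m (last x ! m)) else None)"
    proof (intro ext, clarify)
      fix x m
      show "map_option (Pt \<tau> j) (fL (Tn \<tau> x, m)) =
          (if x \<in> DD (As j) \<and> m < length (hd x) then Some (\<xi>' m (last x ! m)) else None)"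
      proof (cases "x \<in> DD (As j) \<and> m < length (hd x)")
        case True
        then have xD: "x \<in> DD (As j)" "m < lh x" by (auto simp: lh_def)
        have TD: "Tn \<tau> x \<in> DD (As j)" using Tn_DD_iff[OF goodp_sym[OF g]] xD by simp
        have lj: "length x = Suc j" using xD node_len by blast
        have "last (Tn \<tau> x) = Tn \<tau> x ! j" using last_node[OF TD] .
        also have "\<dots> = (if j = n - 1 then mp \<tau> (x ! j) else x ! j)" using lj by (simp add: Tn_nth)
        finally have lT: "last (Tn \<tau> x) ! m = (if j = n - 1 then \<tau> m (last x ! m) else last x ! m)"
          using xD last_node[OF xD(1)] lj by (auto simp: DD_As_iff)
        have "length (hd (Tn \<tau> x)) = length (hd x)" using Tn_lh[of \<tau> x] by (simp add: lh_def)
        then show ?thesis using True TD lT by (simp add: fLd \<xi>'_def)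
      next
        case False
        then have "\<not> (Tn \<tau> x \<in> DD (As j) \<and> m < length (hd (Tn \<tau> x)))"
          using Tn_DD_iff[OF goodp_sym[OF g]] Tn_lh[of \<tau> x] by (auto simp: lh_def)
        then show ?thesis using False by (simp add: fLd)
      qed
    qed
    then have "Pt \<tau> k c = enc (\<lambda>(x, m). if x \<in> DD (As j) \<and> m < length (hd x) then Some (\<xi>' m (last x ! m)) else None)"
      using False j dc by simp
    then show ?thesis using LRawI[OF bij'] j by (simp add: L_def)
  qed
qed

lemma Pt_B:
  assumes g: "goodp \<sigma> \<tau>" and k: "1 \<le> k" "k \<le> s" and c: "c \<in> B k"
  shows "Pt \<tau> k c \<in> B k"
proof -
  obtain j where j: "k = Suc j" using k by (cases k) auto
  obtain f where f: "f \<in> Raw (As j)" "\<forall>m. f (replicate k [], m) \<noteq> None" "c = enc f" using c j by (auto simp: B_def)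
  show ?thesis
  proof (cases "Suc j < n")
    case True then show ?thesis using c j by simp
  next
    case False
    have dc: "dec c = f" using f dec_enc Raw_Univ[of k] k j by auto
    have IH: "\<And>v. v \<in> A j \<Longrightarrow> Pt \<tau> j v \<in> A j" using Pt_A[OF g] k j by simp
    define f' where "f' = (\<lambda>(x, m). map_option (Pt \<tau> j) (f (Tn \<tau> x, m)))"
    have f'R: "f' \<in> Raw (As j)" unfolding f'_def using Raw_transform[OF f(1) g] IH by blast
    have "\<forall>m. f' (replicate k [], m) \<noteq> None" using f(2) Tn_rep by (simp add: f'_def)
    moreover have "Pt \<tau> k c = enc f'" using False j dc by (simp add: f'_def)
    ultimately show ?thesis using f'R j by (auto simp: B_def)
  qed
qed

lemma Pt_Bn:
  assumes g: "goodp \<sigma> \<tau>" and c: "c \<in> B n"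
  shows "Pt \<tau> n c = c"
proof -
  obtain j where j: "n = Suc j" using n1 by (cases n) auto
  obtain f where f: "f \<in> Raw (As j)" "\<forall>m. f (replicate n [], m) \<noteq> None" "c = enc f" using c j by (auto simp: B_def)
  have dc: "dec c = f" using f dec_enc Raw_Univ[of n] n1 ns j by auto
  have "(\<lambda>(x, m). map_option (Pt \<tau> j) (f (Tn \<tau> x, m))) = f"
  proof (intro ext, clarify)
    fix x m
    have Pj: "Pt \<tau> j = (\<lambda>v. v)" using Pt_low j by (intro ext) simp
    show "map_option (Pt \<tau> j) (f (Tn \<tau> x, m)) = f (x, m)"
    proof (cases "x \<in> DD (As j)")
      case True
      have TD: "Tn \<tau> x \<in> DD (As j)" using Tn_DD_iff[OF goodp_sym[OF g]] True by simp
      obtain v where v: "f (replicate n [], m) = Some v" using f(2) by blast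
      have rD: "replicate n [] \<in> DD (As j)" using root_DD[of "As j"] j by simp
      have "f (x, m) = Some v" using RawD(3)[OF f(1) rD True _ v] prec_root[of "As j" x] True j by simp
      moreover have "f (Tn \<tau> x, m) = Some v" using RawD(3)[OF f(1) rD TD _ v] prec_root[of "As j" "Tn \<tau> x"] TD j by simp
      ultimately show ?thesis using Pj by simp
    next
      case False
      then have "Tn \<tau> x \<notin> DD (As j)" using Tn_DD_iff[OF goodp_sym[OF g]] by simp
      then show ?thesis using False RawD(1)[OF f(1)] by simp
    qed
  qed
  moreover have "\<not> Suc j < n" using j by simp
  ultimately have "Pt \<tau> (Suc j) c = c" using dc f(3) by simp
  moreover have "Pt \<tau> n c = Pt \<tau> (Suc j) c" by (metis j)
  ultimately show ?thesis by simp
qed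

lemma Pt_Dom: "goodp \<sigma> \<tau> \<Longrightarrow> 1 \<le> m \<Longrightarrow> m \<le> s \<Longrightarrow> c \<in> Dom k m \<Longrightarrow> Pt \<tau> m c \<in> Dom k m"
  by (cases k) (auto simp: A_def intro: Pt_A[unfolded A_def] Pt_B Pt_L)

lemma Pt_Dom_surj: "goodp \<sigma> \<tau> \<Longrightarrow> 1 \<le> m \<Longrightarrow> m \<le> s \<Longrightarrow> c \<in> Dom k m \<Longrightarrow> \<exists>c'\<in>Dom k m. Pt \<tau> m c' = c"
proof -
  assume a: "goodp \<sigma> \<tau>" "1 \<le> m" "m \<le> s" "c \<in> Dom k m"
  have g2: "goodp \<tau> \<sigma>" using goodp_sym[OF a(1)] .
  have "Pt \<sigma> m c \<in> Dom k m" using Pt_Dom[OF g2 a(2-4)] .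
  moreover have "Pt \<tau> m (Pt \<sigma> m c) = c" using Pt_inv[OF g2 a(3)] a(2,4) Dom_A by blast
  ultimately show ?thesis by blast
qed

end

context bm2 begin

lemma Pt0: "Pt \<tau> 0 = (\<lambda>u. u)" by (rule ext) simp

definition Penv :: "(nat \<Rightarrow> 'u \<Rightarrow> 'u) \<Rightarrow> 'u env \<Rightarrow> 'u env" where
  "Penv \<tau> \<rho> = (fst \<rho>, \<lambda>k m i. Pt \<tau> m (snd \<rho> k m i))"

lemma Penv_fst[simp]: "fst (Penv \<tau> \<rho>) = fst \<rho>" by (simp add: Penv_def)
lemma Penv_snd[simp]: "snd (Penv \<tau> \<rho>) k m i = Pt \<tau> m (snd \<rho> k m i)" by (simp add: Penv_def)

lemma Penv_updN: "Penv \<tau> (updN \<rho> i c) = updN (Penv \<tau> \<rho>) i c"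
  by (simp add: Penv_def updN_def)
lemma Penv_updF: "Penv \<tau> (updF \<rho> k m i c) = updF (Penv \<tau> \<rho>) k m i (Pt \<tau> m c)"
  by (auto simp: Penv_def updF_def intro!: ext)

lemma envOK_Penv: "goodp \<sigma> \<tau> \<Longrightarrow> envOK \<rho> \<Longrightarrow> envOK (Penv \<tau> \<rho>)"
  unfolding envOK_def using Pt_Dom by simp

lemma envOK_updN: "envOK \<rho> \<Longrightarrow> envOK (updN \<rho> i c)"
  by (simp add: envOK_def updN_def)
lemma envOK_updF: "envOK \<rho> \<Longrightarrow> c \<in> Dom k m \<Longrightarrow> envOK (updF \<rho> k m i c)"
  by (simp add: envOK_def updF_def)

lemma ev_equiv:
  assumes g: "goodp \<sigma> \<tau>" and e: "envOK \<rho>" and a: "\<alpha> \<in> M"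
  shows "wfT s t \<Longrightarrow> evT (Penv \<tau> \<rho>) (Tn \<sigma> \<alpha>) t = evT \<rho> \<alpha> t"
    "wfF s Z \<Longrightarrow> evF (Penv \<tau> \<rho>) (Tn \<sigma> \<alpha>) Z = map_option (Pt \<tau> (ty Z)) (evF \<rho> \<alpha> Z)"
proof (induction t and Z)
  case (Ap1 Z t)
  have wz: "wfF s Z" "ty Z = 1" "wfT s t" using Ap1.prems by auto
  show ?case
  proof (cases "evF \<rho> \<alpha> Z")
    case None then show ?thesis using Ap1.IH(1)[OF wz(1)] by simp
  next
    case (Some f)
    have fA: "f \<in> A 1" using evF_A(2)[OF e a wz(1) Some] wz(2) by simp
    have l1: "length (take 1 \<alpha>) = 1" using M_len[OF a] s1 by simp
    have "\<And>m. dec (Pt \<tau> 1 f) (take 1 (Tn \<sigma> \<alpha>), m) = dec f (take 1 \<alpha>, m)"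
      using Pt_dec[OF g _ s1 fA l1] by (simp add: Tn_take Pt0 option.map_ident del: Pt.simps)
    then show ?thesis using Ap1.IH(1)[OF wz(1)] Ap1.IH(2)[OF wz(3)] Some wz(2)
      by (simp del: Pt.simps split: option.splits)
  qed
next
  case (ApF Z t)
  have wz: "wfF s Z" "2 \<le> ty Z" "wfT s t" "ty Z \<le> s" using ApF.prems wf_ty by auto
  show ?case
  proof (cases "evF \<rho> \<alpha> Z")
    case None then show ?thesis using ApF.IH(1)[OF wz(1)] by simp
  next
    case (Some f)
    have fA: "f \<in> A (ty Z)" using evF_A(2)[OF e a wz(1) Some] by simp
    have l1: "length (take (ty Z) \<alpha>) = ty Z" using M_len[OF a] wz by simp
    have "\<And>m. dec (Pt \<tau> (ty Z) f) (take (ty Z) (Tn \<sigma> \<alpha>), m) = map_option (Pt \<tau> (ty Z - 1)) (dec f (take (ty Z) \<alpha>, m))"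
      using Pt_dec[OF g _ wz(4) fA l1] wz by (simp add: Tn_take)
    then show ?thesis using ApF.IH(1)[OF wz(1)] ApF.IH(2)[OF wz(3)] Some
      by (simp del: Pt.simps split: option.splits)
  qed
next
  case (NS Z)
  have wz: "wfF s Z" "ty Z \<le> s" using NS.prems wf_ty by auto
  show ?case
  proof (cases "evF \<rho> \<alpha> Z")
    case None then show ?thesis using NS.IH[OF wz(1)] by simp
  next
    case (Some f)
    have fA: "f \<in> A (ty Z)" using evF_A(2)[OF e a wz(1) Some] by simp
    then show ?thesis using NS.IH[OF wz(1)] Some Pt_Sop[OF g wz(2) fA] by simp
  qed
next
  case (KC m)
  then show ?case using Pt_Kc[OF g] by simp
qed (auto split: option.splits)

lemma thru_transfer:
  assumes g: "goodp \<sigma> \<tau>" and Q: "\<And>\<beta>. \<beta> \<in> M \<Longrightarrow> Q (Tn \<sigma> \<beta>) = Q' \<beta>"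
  shows "(\<forall>P\<in>thru (Tn \<sigma> \<alpha>). \<exists>\<beta>\<in>P. Q \<beta>) = (\<forall>P\<in>thru \<alpha>. \<exists>\<beta>\<in>P. Q' \<beta>)"
proof -
  have "\<And>P. P \<in> thru \<alpha> \<Longrightarrow> (\<exists>\<beta>\<in>Tn \<sigma> ` P. Q \<beta>) = (\<exists>\<beta>\<in>P. Q' \<beta>)"
  proof -
    fix P assume "P \<in> thru \<alpha>"
    then have "P \<subseteq> M" by (auto simp: thru_def is_path_def)
    then show "(\<exists>\<beta>\<in>Tn \<sigma> ` P. Q \<beta>) = (\<exists>\<beta>\<in>P. Q' \<beta>)" using Q by auto
  qed
  then show ?thesis using thru_Tn[OF g] by simp
qed

lemma M_transfer:
  assumes g: "goodp \<sigma> \<tau>" and R: "\<And>\<beta>. \<beta> \<in> M \<Longrightarrow> R (Tn \<sigma> \<beta>) = R' \<beta>"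
  shows "(\<forall>\<beta>\<in>M. prec \<beta> (Tn \<sigma> \<alpha>) \<longrightarrow> R \<beta>) = (\<forall>\<beta>\<in>M. prec \<beta> \<alpha> \<longrightarrow> R' \<beta>)"
proof
  assume L: "\<forall>\<beta>\<in>M. prec \<beta> (Tn \<sigma> \<alpha>) \<longrightarrow> R \<beta>"
  show "\<forall>\<beta>\<in>M. prec \<beta> \<alpha> \<longrightarrow> R' \<beta>"
  proof (intro ballI impI)
    fix \<beta> assume "\<beta> \<in> M" "prec \<beta> \<alpha>"
    then have "Tn \<sigma> \<beta> \<in> M" "prec (Tn \<sigma> \<beta>) (Tn \<sigma> \<alpha>)" using Tn_M[OF g] Tn_prec by auto
    then show "R' \<beta>" using L R \<open>\<beta> \<in> M\<close> by auto
  qed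
next
  assume L: "\<forall>\<beta>\<in>M. prec \<beta> \<alpha> \<longrightarrow> R' \<beta>"
  show "\<forall>\<beta>\<in>M. prec \<beta> (Tn \<sigma> \<alpha>) \<longrightarrow> R \<beta>"
  proof (intro ballI impI)
    fix \<beta> assume b: "\<beta> \<in> M" "prec \<beta> (Tn \<sigma> \<alpha>)"
    define \<beta>0 where "\<beta>0 = Tn \<tau> \<beta>"
    have b0: "\<beta> = Tn \<sigma> \<beta>0" using Tn_inv[OF goodp_sym[OF g]] by (simp add: \<beta>0_def)
    have "\<beta>0 \<in> M" using b b0 Tn_M[OF g] by simp
    moreover have "prec \<beta>0 \<alpha>" using b b0 Tn_prec_iff[OF g] by simp
    ultimately show "R \<beta>" using L R b0 by auto
  qed
qed

lemma M_ex_transfer: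
  assumes g: "goodp \<sigma> \<tau>" and R: "\<And>\<beta>. \<beta> \<in> M \<Longrightarrow> R (Tn \<sigma> \<beta>) = R' \<beta>"
  shows "(\<exists>\<gamma>\<in>M. prec (Tn \<sigma> \<alpha>) \<gamma> \<and> R \<gamma>) = (\<exists>\<gamma>\<in>M. prec \<alpha> \<gamma> \<and> R' \<gamma>)"
proof
  assume "\<exists>\<gamma>\<in>M. prec (Tn \<sigma> \<alpha>) \<gamma> \<and> R \<gamma>"
  then obtain \<gamma> where c: "\<gamma> \<in> M" "prec (Tn \<sigma> \<alpha>) \<gamma>" "R \<gamma>" by blast
  define \<gamma>0 where "\<gamma>0 = Tn \<tau> \<gamma>"
  have b0: "\<gamma> = Tn \<sigma> \<gamma>0" using Tn_inv[OF goodp_sym[OF g]] by (simp add: \<gamma>0_def)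
  have "\<gamma>0 \<in> M" using c b0 Tn_M[OF g] by simp
  moreover have "prec \<alpha> \<gamma>0" using c b0 Tn_prec_iff[OF g] by simp
  ultimately show "\<exists>\<gamma>\<in>M. prec \<alpha> \<gamma> \<and> R' \<gamma>" using c R b0 by auto
next
  assume "\<exists>\<gamma>\<in>M. prec \<alpha> \<gamma> \<and> R' \<gamma>"
  then obtain \<gamma> where c: "\<gamma> \<in> M" "prec \<alpha> \<gamma>" "R' \<gamma>" by blast
  then have "Tn \<sigma> \<gamma> \<in> M" "prec (Tn \<sigma> \<alpha>) (Tn \<sigma> \<gamma>)" "R (Tn \<sigma> \<gamma>)" using Tn_M[OF g] Tn_prec R by auto
  then show "\<exists>\<gamma>\<in>M. prec (Tn \<sigma> \<alpha>) \<gamma> \<and> R \<gamma>" by blast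
qed

lemma Dom_all_transfer:
  assumes g: "goodp \<sigma> \<tau>" "1 \<le> m" "m \<le> s"
  shows "(\<forall>c\<in>Dom k m. Q c) = (\<forall>c\<in>Dom k m. Q (Pt \<tau> m c))"
  using Pt_Dom[OF g] Pt_Dom_surj[OF g] by metis

lemma Dom_ex_transfer:
  assumes g: "goodp \<sigma> \<tau>" "1 \<le> m" "m \<le> s"
  shows "(\<exists>c\<in>Dom k m. Q c) = (\<exists>c\<in>Dom k m. Q (Pt \<tau> m c))"
  using Pt_Dom[OF g] Pt_Dom_surj[OF g] by metis

lemma map_Pt_inj:
  assumes g: "goodp \<sigma> \<tau>" "k \<le> s" "\<And>v. a = Some v \<Longrightarrow> v \<in> A k" "\<And>v. b = Some v \<Longrightarrow> v \<in> A k"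
  shows "(map_option (Pt \<tau> k) a = map_option (Pt \<tau> k) b) = (a = b)"
  using Pt_inv[OF g(1,2)] assms(3,4) by (cases a; cases b) (auto, metis)

end

context bm2 begin

lemma frc_equiv:
  assumes g: "goodp \<sigma> \<tau>"
  shows "wfP s \<phi> \<Longrightarrow> envOK \<rho> \<Longrightarrow> \<alpha> \<in> M \<Longrightarrow> frc \<phi> (Penv \<tau> \<rho>) (Tn \<sigma> \<alpha>) = frc \<phi> \<rho> \<alpha>"
proof (induction \<phi> arbitrary: \<rho> \<alpha>)
  case Bot then show ?case by simp
next
  case (EqN t u)
  have "\<And>\<beta>. \<beta> \<in> M \<Longrightarrow> (evT (Penv \<tau> \<rho>) (Tn \<sigma> \<beta>) t \<noteq> None \<and> evT (Penv \<tau> \<rho>) (Tn \<sigma> \<beta>) t = evT (Penv \<tau> \<rho>) (Tn \<sigma> \<beta>) u)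
     = (evT \<rho> \<beta> t \<noteq> None \<and> evT \<rho> \<beta> t = evT \<rho> \<beta> u)"
    using ev_equiv(1)[OF g EqN.prems(2)] EqN.prems(1) by simp
  then show ?case using thru_transfer[OF g] by simp
next
  case (EqF Z V)
  have w: "wfF s Z" "wfF s V" "ty Z = ty V" using EqF.prems by auto
  have "\<And>\<beta>. \<beta> \<in> M \<Longrightarrow> (evF (Penv \<tau> \<rho>) (Tn \<sigma> \<beta>) Z \<noteq> None \<and> evF (Penv \<tau> \<rho>) (Tn \<sigma> \<beta>) Z = evF (Penv \<tau> \<rho>) (Tn \<sigma> \<beta>) V)
     = (evF \<rho> \<beta> Z \<noteq> None \<and> evF \<rho> \<beta> Z = evF \<rho> \<beta> V)"
  proof -
    fix \<beta> assume b: "\<beta> \<in> M"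
    have "(map_option (Pt \<tau> (ty Z)) (evF \<rho> \<beta> Z) = map_option (Pt \<tau> (ty Z)) (evF \<rho> \<beta> V)) = (evF \<rho> \<beta> Z = evF \<rho> \<beta> V)"
    proof (rule map_Pt_inj[OF g])
      show "ty Z \<le> s" using wf_ty w(1) by simp
      show "\<And>v. evF \<rho> \<beta> Z = Some v \<Longrightarrow> v \<in> A (ty Z)" using evF_A(2)[OF EqF.prems(2) b w(1)] by simp
      show "\<And>v. evF \<rho> \<beta> V = Some v \<Longrightarrow> v \<in> A (ty Z)" using evF_A(2)[OF EqF.prems(2) b w(2)] w(3) by simp
    qed
    then show "?thesis \<beta>" using ev_equiv(2)[OF g EqF.prems(2) b] w by simp
  qed
  then show ?case using thru_transfer[OF g] by simp
next
  case (Cj a b) then show ?case by simp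
next
  case (Dj a b)
  have "\<And>\<beta>. \<beta> \<in> M \<Longrightarrow> (frc a (Penv \<tau> \<rho>) (Tn \<sigma> \<beta>) \<or> frc b (Penv \<tau> \<rho>) (Tn \<sigma> \<beta>)) = (frc a \<rho> \<beta> \<or> frc b \<rho> \<beta>)"
    using Dj by simp
  then show ?case using thru_transfer[OF g] by simp
next
  case (Im a b)
  have "\<And>\<beta>. \<beta> \<in> M \<Longrightarrow> (frc a (Penv \<tau> \<rho>) (Tn \<sigma> \<beta>) \<longrightarrow> frc b (Penv \<tau> \<rho>) (Tn \<sigma> \<beta>)) = (frc a \<rho> \<beta> \<longrightarrow> frc b \<rho> \<beta>)"
    using Im by simp
  then show ?case using M_transfer[OF g] by simp
next
  case (AllN i a)
  then show ?case using envOK_updN by (simp add: Penv_updN[symmetric])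
next
  case (ExN i a)
  have "\<And>\<beta>. \<beta> \<in> M \<Longrightarrow> (\<exists>c. frc a (updN (Penv \<tau> \<rho>) i c) (Tn \<sigma> \<beta>)) = (\<exists>c. frc a (updN \<rho> i c) \<beta>)"
    using ExN envOK_updN by (simp add: Penv_updN[symmetric])
  then show ?case using thru_transfer[OF g] by simp
next
  case (AllF k m i a)
  have m: "1 \<le> m" "m \<le> s" "wfP s a" using AllF.prems by auto
  have "(\<forall>c\<in>Dom k m. frc a (updF (Penv \<tau> \<rho>) k m i c) (Tn \<sigma> \<alpha>))
      = (\<forall>c\<in>Dom k m. frc a (updF (Penv \<tau> \<rho>) k m i (Pt \<tau> m c)) (Tn \<sigma> \<alpha>))"
    by (rule Dom_all_transfer[OF g m(1,2)])
  also have "\<dots> = (\<forall>c\<in>Dom k m. frc a (updF \<rho> k m i c) \<alpha>)"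
    using AllF.IH m(3) envOK_updF[OF AllF.prems(2)] AllF.prems(3) by (simp add: Penv_updF[symmetric])
  finally show ?case by simp
next
  case (ExF k m i a)
  have m: "1 \<le> m" "m \<le> s" "wfP s a" using ExF.prems by auto
  have "\<And>\<beta>. \<beta> \<in> M \<Longrightarrow> (\<exists>c\<in>Dom k m. frc a (updF (Penv \<tau> \<rho>) k m i c) (Tn \<sigma> \<beta>)) = (\<exists>c\<in>Dom k m. frc a (updF \<rho> k m i c) \<beta>)"
  proof -
    fix \<beta> assume b: "\<beta> \<in> M"
    have "(\<exists>c\<in>Dom k m. frc a (updF (Penv \<tau> \<rho>) k m i c) (Tn \<sigma> \<beta>))
      = (\<exists>c\<in>Dom k m. frc a (updF (Penv \<tau> \<rho>) k m i (Pt \<tau> m c)) (Tn \<sigma> \<beta>))"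
      by (rule Dom_ex_transfer[OF g m(1,2)])
    also have "\<dots> = (\<exists>c\<in>Dom k m. frc a (updF \<rho> k m i c) \<beta>)"
      using ExF.IH m(3) envOK_updF[OF ExF.prems(2)] b by (simp add: Penv_updF[symmetric])
    finally show "?thesis \<beta>" .
  qed
  then show ?case using thru_transfer[OF g] by simp
next
  case (Prv t a)
  have w: "wfT s t" "wfP s a" using Prv.prems by auto
  have "\<And>\<beta>. \<beta> \<in> M \<Longrightarrow> (case evT (Penv \<tau> \<rho>) (Tn \<sigma> \<beta>) t of None \<Rightarrow> False
       | Some m \<Rightarrow> (\<exists>\<gamma>\<in>M. prec (Tn \<sigma> \<beta>) \<gamma> \<and> length (hd \<gamma>) = m \<and> frc a (Penv \<tau> \<rho>) \<gamma>))
     = (case evT \<rho> \<beta> t of None \<Rightarrow> False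
       | Some m \<Rightarrow> (\<exists>\<gamma>\<in>M. prec \<beta> \<gamma> \<and> length (hd \<gamma>) = m \<and> frc a \<rho> \<gamma>))"
  proof -
    fix \<beta> assume b: "\<beta> \<in> M"
    have e: "evT (Penv \<tau> \<rho>) (Tn \<sigma> \<beta>) t = evT \<rho> \<beta> t" using ev_equiv(1)[OF g Prv.prems(2) b w(1)] .
    have "\<And>m. (\<exists>\<gamma>\<in>M. prec (Tn \<sigma> \<beta>) \<gamma> \<and> (length (hd \<gamma>) = m \<and> frc a (Penv \<tau> \<rho>) \<gamma>))
       = (\<exists>\<gamma>\<in>M. prec \<beta> \<gamma> \<and> (length (hd \<gamma>) = m \<and> frc a \<rho> \<gamma>))"
    proof (rule M_ex_transfer[OF g])
      fix m \<gamma> assume "\<gamma> \<in> M"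
      then show "(length (hd (Tn \<sigma> \<gamma>)) = m \<and> frc a (Penv \<tau> \<rho>) (Tn \<sigma> \<gamma>)) = (length (hd \<gamma>) = m \<and> frc a \<rho> \<gamma>)"
        using Prv.IH[OF w(2) Prv.prems(2)] Tn_lh[of \<sigma> \<gamma>] by (simp add: lh_def)
    qed
    then show "?thesis \<beta>" using e by (simp split: option.splits)
  qed
  then show ?case using thru_transfer[OF g] by simp
qed

end

definition agr :: "'u env \<Rightarrow> 'u env \<Rightarrow> nat set \<Rightarrow> (kind \<times> nat \<times> nat) set \<Rightarrow> bool" where
  "agr \<rho> \<rho>' N F \<longleftrightarrow> (\<forall>i\<in>N. fst \<rho> i = fst \<rho>' i) \<and> (\<forall>k m i. (k, m, i) \<in> F \<longrightarrow> snd \<rho> k m i = snd \<rho>' k m i)"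

lemma agr_mono: "agr \<rho> \<rho>' N F \<Longrightarrow> N' \<subseteq> N \<Longrightarrow> F' \<subseteq> F \<Longrightarrow> agr \<rho> \<rho>' N' F'"
  unfolding agr_def by blast

lemma fin_fvF0: "finite (fvFT t)" "finite (fvFF Z)"
  by (induction t and Z) auto

lemma fin_fvF: "finite (fvF \<phi>)"
  by (induction \<phi>) (auto simp: fin_fvF0)

lemma sortf_ge: "(k, m, i) \<in> fvF \<phi> \<Longrightarrow> m \<le> sortf \<phi>"
  unfolding sortf_def
  by (rule Max_ge) (auto simp: fin_fvF intro!: image_eqI[where x="(k, m, i)"])

context beth begin

lemma updF_snd: "snd (updF \<rho> k m i c) k' m' i' = (if (k', m', i') = (k, m, i) then c else snd \<rho> k' m' i')"
  by (auto simp: updF_def)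
lemma updF_fst[simp]: "fst (updF \<rho> k m i c) = fst \<rho>" by (simp add: updF_def)
lemma updN_snd[simp]: "snd (updN \<rho> i c) = snd \<rho>" by (simp add: updN_def)
lemma updN_fst: "fst (updN \<rho> i c) = (fst \<rho>)(i := c)" by (simp add: updN_def)

lemma env_eqI: "fst \<rho> = fst \<rho>' \<Longrightarrow> (\<And>k m i. snd \<rho> k m i = snd \<rho>' k m i) \<Longrightarrow> \<rho> = \<rho>'"
  by (metis prod_eqI ext)

lemma updF_comm: "(k, m, i) \<noteq> (k', m', i') \<Longrightarrow> updF (updF \<rho> k m i c) k' m' i' d = updF (updF \<rho> k' m' i' d) k m i c"
  by (rule env_eqI) (auto simp: updF_snd)
lemma updF_over: "updF (updF \<rho> k m i c) k m i d = updF \<rho> k m i d"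
  by (rule env_eqI) (auto simp: updF_snd)
lemma updN_updF: "updN (updF \<rho> k m i c) j d = updF (updN \<rho> j d) k m i c"
  by (rule env_eqI) (auto simp: updF_snd updN_fst)

lemma ev_coinc:
  "agr \<rho> \<rho>' (fvNT t) (fvFT t) \<Longrightarrow> evT \<rho> \<alpha> t = evT \<rho>' \<alpha> t"
  "agr \<rho> \<rho>' (fvNF Z) (fvFF Z) \<Longrightarrow> evF \<rho> \<alpha> Z = evF \<rho>' \<alpha> Z"
proof (induction t and Z)
  case (Pl t u) then show ?case using agr_mono[OF Pl.prems] by (metis evT.simps(4) sup.cobounded1 sup.cobounded2 fvNT.simps(4) fvFT.simps(4))
next
  case (Tm t u) then show ?case using agr_mono[OF Tm.prems] by (metis evT.simps(5) sup.cobounded1 sup.cobounded2 fvNT.simps(5) fvFT.simps(5))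
next
  case (Ap1 Z t) then show ?case using agr_mono[OF Ap1.prems] by (metis evT.simps(6) sup.cobounded1 sup.cobounded2 fvNT.simps(6) fvFT.simps(6))
next
  case (ApF Z t) then show ?case using agr_mono[OF ApF.prems] by (metis evF.simps(4) sup.cobounded1 sup.cobounded2 fvNF.simps(4) fvFF.simps(4))
qed (auto simp: agr_def)

lemma frc_coinc:
  "agr \<rho> \<rho>' (fvN \<phi>) (fvF \<phi>) \<Longrightarrow> frc \<phi> \<rho> \<alpha> = frc \<phi> \<rho>' \<alpha>"
proof (induction \<phi> arbitrary: \<rho> \<rho>' \<alpha>)
  case (EqN t u)
  have "agr \<rho> \<rho>' (fvNT t) (fvFT t)" "agr \<rho> \<rho>' (fvNT u) (fvFT u)" using agr_mono[OF EqN.prems] by auto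
  then show ?case using ev_coinc(1) by simp
next
  case (EqF Z V)
  have "agr \<rho> \<rho>' (fvNF Z) (fvFF Z)" "agr \<rho> \<rho>' (fvNF V) (fvFF V)" using agr_mono[OF EqF.prems] by auto
  then show ?case using ev_coinc(2) by simp
next
  case (Cj a b)
  have "agr \<rho> \<rho>' (fvN a) (fvF a)" "agr \<rho> \<rho>' (fvN b) (fvF b)" using agr_mono[OF Cj.prems] by auto
  then show ?case using Cj.IH by simp
next
  case (Dj a b)
  have "agr \<rho> \<rho>' (fvN a) (fvF a)" "agr \<rho> \<rho>' (fvN b) (fvF b)" using agr_mono[OF Dj.prems] by auto
  then show ?case using Dj.IH by simp
next
  case (Im a b)
  have "agr \<rho> \<rho>' (fvN a) (fvF a)" "agr \<rho> \<rho>' (fvN b) (fvF b)" using agr_mono[OF Im.prems] by auto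
  then show ?case using Im.IH by simp
next
  case (AllN i a)
  have "\<And>c. agr (updN \<rho> i c) (updN \<rho>' i c) (fvN a) (fvF a)" using AllN.prems by (auto simp: agr_def updN_fst)
  then have "\<And>c. frc a (updN \<rho> i c) \<alpha> = frc a (updN \<rho>' i c) \<alpha>" using AllN.IH by blast
  then show ?case by simp
next
  case (ExN i a)
  have "\<And>c. agr (updN \<rho> i c) (updN \<rho>' i c) (fvN a) (fvF a)" using ExN.prems by (auto simp: agr_def updN_fst)
  then have "\<And>c \<beta>. frc a (updN \<rho> i c) \<beta> = frc a (updN \<rho>' i c) \<beta>" using ExN.IH by blast
  then show ?case by simp
next
  case (AllF k m i a)
  have "\<And>c. agr (updF \<rho> k m i c) (updF \<rho>' k m i c) (fvN a) (fvF a)" using AllF.prems by (auto simp: agr_def updF_snd)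
  then have "\<And>c. frc a (updF \<rho> k m i c) \<alpha> = frc a (updF \<rho>' k m i c) \<alpha>" using AllF.IH by blast
  then show ?case by simp
next
  case (ExF k m i a)
  have "\<And>c. agr (updF \<rho> k m i c) (updF \<rho>' k m i c) (fvN a) (fvF a)" using ExF.prems by (auto simp: agr_def updF_snd)
  then have "\<And>c \<beta>. frc a (updF \<rho> k m i c) \<beta> = frc a (updF \<rho>' k m i c) \<beta>" using ExF.IH by blast
  then show ?case by simp
next
  case (Prv t a)
  have "agr \<rho> \<rho>' (fvNT t) (fvFT t)" "agr \<rho> \<rho>' (fvN a) (fvF a)" using agr_mono[OF Prv.prems] by auto
  then have "\<And>\<gamma>. frc a \<rho> \<gamma> = frc a \<rho>' \<gamma>" "\<And>\<beta>. evT \<rho> \<beta> t = evT \<rho>' \<beta> t" using Prv.IH ev_coinc(1) by blast+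
  moreover have "frc a \<rho> = frc a \<rho>'" using calculation by (auto intro: ext)
  ultimately show ?case by (simp only: frc.simps)
qed simp

lemma ty_subst0: "substT nn h g t = substT nn h g t" "ty (substF nn h g Z) = ty Z"
  by (induction t and Z) auto
lemma ty_subst: "ty (substF nn h g Z) = ty Z" by (rule ty_subst0(2))

lemma ev_subst:
  "evT \<rho> \<alpha> (substT nn h g t) = evT (updF \<rho> Lls nn h (snd \<rho> Lls nn g)) \<alpha> t"
  "evF \<rho> \<alpha> (substF nn h g Z) = evF (updF \<rho> Lls nn h (snd \<rho> Lls nn g)) \<alpha> Z"
  by (induction t and Z) (auto simp: updF_snd ty_subst split: option.splits)

lemma frc_subst:
  "(Lls, nn, g) \<notin> allvF \<phi> \<Longrightarrow> frc (substL nn h g \<phi>) \<rho> \<alpha> = frc \<phi> (updF \<rho> Lls nn h (snd \<rho> Lls nn g)) \<alpha>"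
proof (induction \<phi> arbitrary: \<rho> \<alpha>)
  case (AllN i a) then show ?case by (simp add: updN_updF)
next
  case (ExN i a) then show ?case by (simp add: updN_updF)
next
  case (AllF k m i a)
  show ?case
  proof (cases "(k, m, i) = (Lls, nn, h)")
    case True
    then have e: "k = Lls" "m = nn" "i = h" by auto
    show ?thesis unfolding e by (simp add: updF_over)
  next
    case False
    have ng: "(k, m, i) \<noteq> (Lls, nn, g)" "(Lls, nn, g) \<notin> allvF a" using AllF.prems by auto
    have eq: "\<And>c. updF (updF \<rho> k m i c) Lls nn h (snd (updF \<rho> k m i c) Lls nn g)
        = updF (updF \<rho> Lls nn h (snd \<rho> Lls nn g)) k m i c"
      using False ng by (auto simp: updF_snd intro: updF_comm)
    have IH: "\<And>c \<beta>. frc (substL nn h g a) (updF \<rho> k m i c) \<beta> = frc a (updF (updF \<rho> Lls nn h (snd \<rho> Lls nn g)) k m i c) \<beta>"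
      using AllF.IH[OF ng(2)] eq by metis
    have sb: "substL nn h g (AllF k m i a) = AllF k m i (substL nn h g a)" using False by auto
    show ?thesis unfolding sb using IH by simp
  qed
next
  case (ExF k m i a)
  show ?case
  proof (cases "(k, m, i) = (Lls, nn, h)")
    case True
    then have e: "k = Lls" "m = nn" "i = h" by auto
    show ?thesis unfolding e by (simp add: updF_over)
  next
    case False
    have ng: "(k, m, i) \<noteq> (Lls, nn, g)" "(Lls, nn, g) \<notin> allvF a" using ExF.prems by auto
    have eq: "\<And>c. updF (updF \<rho> k m i c) Lls nn h (snd (updF \<rho> k m i c) Lls nn g)
        = updF (updF \<rho> Lls nn h (snd \<rho> Lls nn g)) k m i c"
      using False ng by (auto simp: updF_snd intro: updF_comm)
    have IH: "\<And>c \<beta>. frc (substL nn h g a) (updF \<rho> k m i c) \<beta> = frc a (updF (updF \<rho> Lls nn h (snd \<rho> Lls nn g)) k m i c) \<beta>"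
      using ExF.IH[OF ng(2)] eq by metis
    have sb: "substL nn h g (ExF k m i a) = ExF k m i (substL nn h g a)" using False by auto
    show ?thesis unfolding sb using IH by simp
  qed
next
  case (Prv t a)
  have "(Lls, nn, g) \<notin> allvF a" using Prv.prems by simp
  then have "\<And>\<gamma>. frc (substL nn h g a) \<rho> \<gamma> = frc a (updF \<rho> Lls nn h (snd \<rho> Lls nn g)) \<gamma>"
    by (rule Prv.IH)
  then have e1: "frc (substL nn h g a) \<rho> = frc a (updF \<rho> Lls nn h (snd \<rho> Lls nn g))"
    by (intro ext)
  show ?case by (simp only: substL.simps frc.simps e1 ev_subst)
qed (auto simp: ev_subst)

end

context bm begin

lemma thru_mono:
  assumes "\<alpha> \<in> M" "\<beta> \<in> M" "prec \<beta> \<alpha>" shows "thru \<beta> \<subseteq> thru \<alpha>"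
proof
  fix P assume "P \<in> thru \<beta>"
  then have P: "is_path (DD (As (s - 1))) prec P" "\<beta> \<in> P" by (auto simp: thru_def M_As)
  have "\<alpha> \<in> P" using path_closed[OF As_ne P(1) P(2)] assms by (simp add: M_As)
  then show "P \<in> thru \<alpha>" using P by (simp add: thru_def M_As)
qed

lemma frc_mono:
  "\<alpha> \<in> M \<Longrightarrow> \<beta> \<in> M \<Longrightarrow> prec \<beta> \<alpha> \<Longrightarrow> frc \<phi> \<rho> \<alpha> \<Longrightarrow> frc \<phi> \<rho> \<beta>"
proof (induction \<phi> arbitrary: \<rho> \<alpha> \<beta>)
  case (EqN t u) then show ?case using thru_mono[OF EqN.prems(1-3)] by auto
next
  case (EqF t u) then show ?case using thru_mono[OF EqF.prems(1-3)] by auto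
next
  case (Dj a b) then show ?case using thru_mono[OF Dj.prems(1-3)] by (simp add: subset_iff)
next
  case (ExN i a) then show ?case using thru_mono[OF ExN.prems(1-3)] by (simp add: subset_iff)
next
  case (ExF k m i a) then show ?case using thru_mono[OF ExF.prems(1-3)] by (simp add: subset_iff)
next
  case (Prv t a) then show ?case using thru_mono[OF Prv.prems(1-3)] by (simp add: subset_iff)
next
  case (Im a b) then show ?case using prec_trans by simp blast
next
  case (Cj a b) then show ?case by simp
next
  case (AllN i a) then show ?case by simp
next
  case (AllF k m i a) then show ?case by simp
qed simp

lemma path_exists:
  assumes "\<alpha> \<in> M" shows "\<exists>P. P \<in> thru \<alpha>"
proof -
  define F where "F = {Q. Q \<subseteq> M \<and> linset prec Q \<and> \<alpha> \<in> Q}"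
  have "\<forall>C\<in>chains F. \<exists>U\<in>F. \<forall>X\<in>C. X \<subseteq> U"
  proof
    fix C assume C: "C \<in> chains F"
    define U where "U = insert \<alpha> (\<Union>C)"
    have CF: "C \<subseteq> F" and Cch: "\<And>X Y. X \<in> C \<Longrightarrow> Y \<in> C \<Longrightarrow> X \<subseteq> Y \<or> Y \<subseteq> X"
      using C unfolding chains_def chain_subset_def by blast+
    have aF: "{\<alpha>} \<in> F" using assms by (simp add: F_def linset_def prec_refl)
    define C' where "C' = insert {\<alpha>} C"
    have C'F: "C' \<subseteq> F" using CF aF by (simp add: C'_def)
    have C'ch: "\<And>X Y. X \<in> C' \<Longrightarrow> Y \<in> C' \<Longrightarrow> X \<subseteq> Y \<or> Y \<subseteq> X"
    proof -
      fix X Y assume "X \<in> C'" "Y \<in> C'"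
      moreover have "\<And>Z. Z \<in> C \<Longrightarrow> {\<alpha>} \<subseteq> Z" using CF by (auto simp: F_def)
      ultimately show "X \<subseteq> Y \<or> Y \<subseteq> X" using Cch unfolding C'_def by blast
    qed
    have U': "U = \<Union>C'" by (simp add: U_def C'_def)
    have "U \<subseteq> M" using C'F by (auto simp: U' F_def)
    moreover have "linset prec U" unfolding linset_def
    proof (intro ballI)
      fix x y assume "x \<in> U" "y \<in> U"
      then obtain X Y where XY: "X \<in> C'" "Y \<in> C'" "x \<in> X" "y \<in> Y" by (auto simp: U')
      then have "X \<subseteq> Y \<or> Y \<subseteq> X" using C'ch by blast
      then obtain Z where Z: "Z \<in> C'" "x \<in> Z" "y \<in> Z" using XY by blast
      then have "Z \<in> F" using C'F by blast
      then show "prec x y \<or> prec y x" using Z by (auto simp: F_def linset_def)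
    qed
    ultimately have "U \<in> F" by (simp add: F_def U_def)
    moreover have "\<forall>X\<in>C. X \<subseteq> U" by (auto simp: U_def)
    ultimately show "\<exists>U\<in>F. \<forall>X\<in>C. X \<subseteq> U" by blast
  qed
  then obtain P where P: "P \<in> F" "\<forall>X\<in>F. P \<subseteq> X \<longrightarrow> X = P" using Zorn_Lemma2 by blast
  have "is_path M prec P" unfolding is_path_def using P by (auto simp: F_def)
  then show ?thesis using P by (auto simp: thru_def F_def)
qed

end

context bm begin

definition nu :: "nat \<Rightarrow> (nat \<Rightarrow> 'u \<Rightarrow> 'u) \<Rightarrow> 'u list list \<times> nat \<Rightarrow> 'u option" where
  "nu k \<xi> = (\<lambda>(x, m). if x \<in> DD (As k) \<and> m < length (hd x) then Some (\<xi> m (last x ! m)) else None)"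

lemma L_elim:
  assumes "1 \<le> k" "k \<le> s" "c \<in> L k"
  obtains \<xi> where "\<forall>m. bij_betw (\<xi> m) (A (k - 1)) (A (k - 1))" "c = enc (nu (k - 1) \<xi>)" "dec c = nu (k - 1) \<xi>"
proof -
  obtain f where f: "f \<in> LRaw (As (k - 1))" "c = enc f" using assms by (auto simp: L_def)
  then obtain \<xi> where xi: "\<forall>m. bij_betw (\<xi> m) (last (As (k - 1))) (last (As (k - 1)))" "f = nu (k - 1) \<xi>"
    unfolding LRaw_def nu_def by blast
  have "dec c = f" using f dec_enc LRaw_Univ[OF assms(1,2)] by auto
  then show ?thesis using that xi f by (simp add: last_As)
qed

lemma nu_L:
  assumes "1 \<le> k" "\<forall>m. bij_betw (\<xi> m) (A (k - 1)) (A (k - 1))"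
  shows "enc (nu (k - 1) \<xi>) \<in> L k"
proof -
  have "nu (k - 1) \<xi> \<in> LRaw (As (k - 1))" using assms unfolding LRaw_def nu_def by (auto simp: last_As)
  then show ?thesis by (simp add: L_def)
qed

lemma node_entry:
  assumes "x \<in> DD (As k)" "y \<in> DD (As k)" "prec y x" "i \<le> k" "c < lh x"
  shows "y ! i ! c = x ! i ! c"
proof -
  have "x = map (take (lh x)) y" using prec_take[OF As_ne assms(1-3)] .
  then have "x ! i = take (lh x) (y ! i)" using assms(4) node_len[OF assms(2)] by (metis le_imp_less_Suc nth_map)
  then show ?thesis using assms(5) by simp
qed

lemma take_M:
  assumes "\<alpha> \<in> M" "1 \<le> k" "k \<le> s"
  shows "take k \<alpha> \<in> DD (As (k - 1))" "length (hd (take k \<alpha>)) = lh \<alpha>" "last (take k \<alpha>) = \<alpha> ! (k - 1)"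
proof -
  have a: "\<alpha> \<in> DD (As (s - 1))" using assms by (simp add: M_As)
  have k: "Suc (k - 1) = k" "k - 1 \<le> s - 1" using assms by auto
  show "take k \<alpha> \<in> DD (As (k - 1))" using take_node(1)[OF a k(2)] k by simp
  show "length (hd (take k \<alpha>)) = lh \<alpha>" using take_node(2)[OF a k(2)] k by (simp add: lh_def)
  have "length \<alpha> = s" using M_len[OF assms(1)] .
  then have l: "length (take k \<alpha>) = k" using assms by simp
  then have "take k \<alpha> \<noteq> []" using assms by auto
  then have "last (take k \<alpha>) = take k \<alpha> ! (k - 1)" using l by (simp add: last_conv_nth)
  then show "last (take k \<alpha>) = \<alpha> ! (k - 1)" using assms by simp
qed

lemma nu_at:
  assumes "\<alpha> \<in> M" "1 \<le> k" "k \<le> s"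
  shows "nu (k - 1) \<xi> (take k \<alpha>, c) = (if c < lh \<alpha> then Some (\<xi> c (\<alpha> ! (k - 1) ! c)) else None)"
  using take_M[OF assms] by (simp add: nu_def)

lemma appEq_frc:
  assumes n: "1 \<le> nn" "nn \<le> s" and u: "snd \<rho> k1 nn i1 = u" "u \<in> A nn" and v: "snd \<rho> k2 nn i2 = v" "v \<in> A nn"
    and c: "fst \<rho> y = c"
  shows "frc (appEq nn (FV k1 nn i1) (FV k2 nn i2) y) \<rho> \<beta> =
    (\<forall>P\<in>thru \<beta>. \<exists>\<gamma>\<in>P. dec u (take nn \<gamma>, c) \<noteq> None \<and> dec u (take nn \<gamma>, c) = dec v (take nn \<gamma>, c))"
proof (cases "nn = 1")
  case True
  have du: "dec u \<in> Raw (As 0)" "dec v \<in> Raw (As 0)" using A_dec(1)[OF n u(2)] A_dec(1)[OF n v(2)] True by auto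
  have inj: "\<And>a b. a \<in> range num \<Longrightarrow> b \<in> range num \<Longrightarrow> inv num a = inv num b \<Longrightarrow> a = b"
    by (metis f_inv_into_f)
  have "(map_option (inv num) (dec u (take 1 \<gamma>, c)) \<noteq> None \<and>
       map_option (inv num) (dec u (take 1 \<gamma>, c)) = map_option (inv num) (dec v (take 1 \<gamma>, c)))
     = (dec u (take 1 \<gamma>, c) \<noteq> None \<and> dec u (take 1 \<gamma>, c) = dec v (take 1 \<gamma>, c))" for \<gamma>
  proof (cases "dec u (take 1 \<gamma>, c)")
    case None then show ?thesis by simp
  next
    case (Some a)
    show ?thesis
    proof (cases "dec v (take 1 \<gamma>, c)")
      case None then show ?thesis using Some by simp
    next
      case (Some b)
      have "a \<in> last (As 0)" using RawD(2)[OF du(1)] \<open>dec u (take 1 \<gamma>, c) = Some a\<close> by blast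
      moreover have "b \<in> last (As 0)" using RawD(2)[OF du(2)] Some by blast
      ultimately have "a \<in> range num" "b \<in> range num" by (auto simp: last_As A0)
      then have "(inv num a = inv num b) = (a = b)" using inj by blast
      then show ?thesis using Some \<open>dec u (take 1 \<gamma>, c) = Some a\<close> by simp
    qed
  qed
  then show ?thesis using True u v c by (simp add: appEq_def)
next
  case False
  then have "ty (FV k1 nn i1) = nn" "\<not> nn = 1" by auto
  then show ?thesis using u v c by (simp add: appEq_def)
qed

lemma lt_frc:
  assumes "z \<noteq> x" "z \<noteq> y" "\<beta> \<in> P" "fst \<rho> y < fst \<rho> x"
  shows "\<exists>\<beta>0\<in>P. \<exists>d. frc (EqN (Pl (NV y) (Sc (NV z))) (NV x)) (updN \<rho> z d) \<beta>0"
proof -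
  define d where "d = fst \<rho> x - fst \<rho> y - 1"
  have "frc (EqN (Pl (NV y) (Sc (NV z))) (NV x)) (updN \<rho> z d) \<beta>"
    using assms by (auto simp: updN_fst d_def thru_def)
  then show ?thesis using assms(3) by blast
qed

lemma le_frc_D:
  assumes "z \<noteq> x" "z \<noteq> y" "\<beta> \<in> M" "frc (ExN z (EqN (Pl (NV y) (NV z)) (NV x))) \<rho> \<beta>"
  shows "fst \<rho> y \<le> fst \<rho> x"
proof -
  obtain P where P: "P \<in> thru \<beta>" using path_exists[OF assms(3)] by blast
  have h: "\<forall>P\<in>thru \<beta>. \<exists>\<beta>0\<in>P. \<exists>d. frc (EqN (Pl (NV y) (NV z)) (NV x)) (updN \<rho> z d) \<beta>0"
    using assms(4) by (simp only: frc.simps(8))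
  obtain \<beta>0 d where "\<beta>0 \<in> P" "frc (EqN (Pl (NV y) (NV z)) (NV x)) (updN \<rho> z d) \<beta>0" using h P by blast
  moreover have "\<beta>0 \<in> M" using calculation(1) P by (auto simp: thru_def is_path_def)
  ultimately obtain P' where P': "P' \<in> thru \<beta>0" using path_exists by blast
  moreover have "\<forall>P\<in>thru \<beta>0. \<exists>\<beta>1\<in>P. evT (updN \<rho> z d) \<beta>1 (Pl (NV y) (NV z)) \<noteq> None \<and> evT (updN \<rho> z d) \<beta>1 (Pl (NV y) (NV z)) = evT (updN \<rho> z d) \<beta>1 (NV x)"
    using \<open>frc (EqN _ _) _ \<beta>0\<close> by (simp only: frc.simps(2))
  ultimately obtain \<beta>1 where "evT (updN \<rho> z d) \<beta>1 (Pl (NV y) (NV z)) = evT (updN \<rho> z d) \<beta>1 (NV x)"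
    by blast
  then show ?thesis using assms(1,2) by (auto simp: updN_fst)
qed

lemma LL2_ok: "envOK \<rho> \<Longrightarrow> frc (LL2 nn i j) \<rho> root"
proof -
  have "\<forall>P\<in>thru root. \<exists>\<beta>\<in>P. frc (EqF (FV Lls nn i) (FV Lls nn j)) \<rho> \<beta> \<or> frc (Ng (EqF (FV Lls nn i) (FV Lls nn j))) \<rho> \<beta>"
  proof
    fix P assume P: "P \<in> thru root"
    show "\<exists>\<beta>\<in>P. frc (EqF (FV Lls nn i) (FV Lls nn j)) \<rho> \<beta> \<or> frc (Ng (EqF (FV Lls nn i) (FV Lls nn j))) \<rho> \<beta>"
    proof (cases "snd \<rho> Lls nn i = snd \<rho> Lls nn j")
      case True
      then have "frc (EqF (FV Lls nn i) (FV Lls nn j)) \<rho> root" by (auto simp: thru_def)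
      then show ?thesis using P by (auto simp: thru_def)
    next
      case False
      have "frc (Ng (EqF (FV Lls nn i) (FV Lls nn j))) \<rho> root"
      proof -
        have "\<And>\<beta>. \<beta> \<in> M \<Longrightarrow> \<not> frc (EqF (FV Lls nn i) (FV Lls nn j)) \<rho> \<beta>"
        proof
          fix \<beta> assume "\<beta> \<in> M" "frc (EqF (FV Lls nn i) (FV Lls nn j)) \<rho> \<beta>"
          moreover obtain P' where "P' \<in> thru \<beta>" using path_exists calculation by blast
          ultimately show False using False by auto
        qed
        then show ?thesis by (auto simp: Ng_def)
      qed
      then show ?thesis using P by (auto simp: thru_def)
    qed
  qed
  then show ?thesis by (simp add: LL2_def)
qed

end

lemma fvF_allvF0: "fvFT t \<subseteq> fvFT t" "fvFF Z \<subseteq> fvFF Z" by auto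
lemma fvF_allvF: "fvF \<phi> \<subseteq> allvF \<phi>"
  by (induction \<phi>) auto

context bm2 begin

lemma Pt_n: "Pt \<tau> n u = enc (\<lambda>(x, m). dec u (Tn \<tau> x, m))"
proof -
  obtain j where j: "n = Suc j" using n1 by (cases n) auto
  have nj: "\<not> Suc j < n" "j < n" using j by auto
  have Pj: "Pt \<tau> j = (\<lambda>v. v)" using Pt_low[OF nj(2)] by (intro ext) simp
  have "Pt \<tau> (Suc j) u = enc (\<lambda>(x, m). map_option (Pt \<tau> j) (dec u (Tn \<tau> x, m)))" using nj(1) by simp
  also have "\<dots> = enc (\<lambda>(x, m). dec u (Tn \<tau> x, m))" by (simp add: Pj option.map_ident)
  finally show ?thesis by (metis j)
qed

definition sw :: "(nat \<Rightarrow> 'u \<Rightarrow> 'u) \<Rightarrow> (nat \<Rightarrow> 'u \<Rightarrow> 'u) \<Rightarrow> nat \<Rightarrow> 'u \<Rightarrow> 'u" where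
  "sw a b y e = (if e \<in> A (n - 1) then inv_into (A (n - 1)) (b y) (a y e) else e)"

lemma sw_A: "bij_betw (a y) (A (n - 1)) (A (n - 1)) \<Longrightarrow> bij_betw (b y) (A (n - 1)) (A (n - 1))
   \<Longrightarrow> e \<in> A (n - 1) \<Longrightarrow> sw a b y e \<in> A (n - 1)"
proof -
  assume ba: "bij_betw (a y) (A (n - 1)) (A (n - 1))" and bb: "bij_betw (b y) (A (n - 1)) (A (n - 1))" and e: "e \<in> A (n - 1)"
  have "a y e \<in> b y ` A (n - 1)" using ba bb e by (auto simp: bij_betw_def)
  then show ?thesis using e by (simp add: sw_def inv_into_into)
qed

lemma sw_inv: "bij_betw (a y) (A (n - 1)) (A (n - 1)) \<Longrightarrow> bij_betw (b y) (A (n - 1)) (A (n - 1))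
   \<Longrightarrow> sw b a y (sw a b y e) = e"
proof -
  assume ba: "bij_betw (a y) (A (n - 1)) (A (n - 1))" and bb: "bij_betw (b y) (A (n - 1)) (A (n - 1))"
  show ?thesis
  proof (cases "e \<in> A (n - 1)")
    case True
    have s1': "sw a b y e \<in> A (n - 1)" using sw_A[of a y b e] ba bb True by blast
    have "a y e \<in> b y ` A (n - 1)" using ba bb True by (auto simp: bij_betw_def)
    then have "b y (sw a b y e) = a y e" using True unfolding sw_def by (simp add: f_inv_into_f)
    then have "sw b a y (sw a b y e) = inv_into (A (n - 1)) (a y) (a y e)" using s1' by (simp add: sw_def)
    also have "\<dots> = e" using True ba by (simp add: bij_betw_def inv_into_f_f)
    finally show ?thesis .
  qed (simp add: sw_def)
qed

lemma sw_good:
  assumes "\<forall>m. bij_betw (a m) (A (n - 1)) (A (n - 1))" "\<forall>m. bij_betw (b m) (A (n - 1)) (A (n - 1))"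
  shows "goodp (sw a b) (sw b a)"
  unfolding goodp_def
proof (intro conjI allI ballI)
  fix y e
  show "sw b a y (sw a b y e) = e" using sw_inv[of a y b e] assms by blast
  show "sw a b y (sw b a y e) = e" using sw_inv[of b y a e] assms by blast
next
  fix y e assume "e \<in> A (n - 1)"
  then show "sw a b y e \<in> A (n - 1)" "sw b a y e \<in> A (n - 1)" using sw_A[of a y b e] sw_A[of b y a e] assms by blast+
qed

lemma Pt_n_swap:
  assumes xi: "\<forall>m. bij_betw (\<xi> m) (A (n - 1)) (A (n - 1))" and ze: "\<forall>m. bij_betw (\<zeta> m) (A (n - 1)) (A (n - 1))"
    and dH: "dec H = nu (n - 1) \<xi>"
  shows "Pt (sw \<zeta> \<xi>) n H = enc (nu (n - 1) \<zeta>)"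
proof -
  have g: "goodp (sw \<xi> \<zeta>) (sw \<zeta> \<xi>)" using sw_good[OF xi ze] .
  have "(\<lambda>(x, m). nu (n - 1) \<xi> (Tn (sw \<zeta> \<xi>) x, m)) = nu (n - 1) \<zeta>"
  proof (intro ext, clarify)
    fix x m
    show "nu (n - 1) \<xi> (Tn (sw \<zeta> \<xi>) x, m) = nu (n - 1) \<zeta> (x, m)"
    proof (cases "x \<in> DD (As (n - 1)) \<and> m < length (hd x)")
      case True
      then have xD: "x \<in> DD (As (n - 1))" "m < lh x" by (auto simp: lh_def)
      have TD: "Tn (sw \<zeta> \<xi>) x \<in> DD (As (n - 1))" using Tn_DD_iff[OF goodp_sym[OF g]] xD by simp
      have lj: "length x = n" using node_len[OF xD(1)] n1 by simp
      have "last (Tn (sw \<zeta> \<xi>) x) = Tn (sw \<zeta> \<xi>) x ! (n - 1)" using last_node[OF TD] .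
      also have "\<dots> = mp (sw \<zeta> \<xi>) (x ! (n - 1))" using lj n1 by (simp add: Tn_nth)
      finally have lT: "last (Tn (sw \<zeta> \<xi>) x) ! m = sw \<zeta> \<xi> m (last x ! m)"
        using xD last_node[OF xD(1)] lj by (auto simp: DD_As_iff)
      have "length (x ! (n - 1)) = lh x" "set (x ! (n - 1)) \<subseteq> A (n - 1)" using xD(1) by (auto simp: DD_As_iff)
      then have eA: "last x ! m \<in> A (n - 1)" using xD(2) last_node[OF xD(1)] by (metis nth_mem subsetD)
      have "\<xi> m (sw \<zeta> \<xi> m (last x ! m)) = \<zeta> m (last x ! m)"
      proof -
        have "\<zeta> m (last x ! m) \<in> A (n - 1)" using bij_betw_apply[OF ze[rule_format] eA] .
        then have "\<zeta> m (last x ! m) \<in> \<xi> m ` A (n - 1)" using xi by (simp add: bij_betw_def)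
        then show ?thesis using eA by (simp add: sw_def f_inv_into_f)
      qed
      moreover have "length (hd (Tn (sw \<zeta> \<xi>) x)) = length (hd x)" using Tn_lh[of _ x] by (simp add: lh_def)
      ultimately show ?thesis using True TD lT by (simp add: nu_def)
    next
      case False
      then have "\<not> (Tn (sw \<zeta> \<xi>) x \<in> DD (As (n - 1)) \<and> m < length (hd (Tn (sw \<zeta> \<xi>) x)))"
        using Tn_DD_iff[OF goodp_sym[OF g]] Tn_lh[of _ x] by (auto simp: lh_def)
      then show ?thesis using False by (simp add: nu_def)
    qed
  qed
  then show ?thesis using Pt_n dH by simp
qed

lemma Tn_fix:
  assumes b: "\<beta> \<in> M" and fx: "\<And>y. y < lh \<beta> \<Longrightarrow> \<sigma> y (\<beta> ! (n - 1) ! y) = \<beta> ! (n - 1) ! y"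
  shows "Tn \<sigma> \<beta> = \<beta>"
proof (rule nth_equalityI)
  show "length (Tn \<sigma> \<beta>) = length \<beta>" by simp
  fix i assume i: "i < length (Tn \<sigma> \<beta>)"
  show "Tn \<sigma> \<beta> ! i = \<beta> ! i"
  proof (cases "i = n - 1")
    case True
    have len: "length (\<beta> ! (n - 1)) = lh \<beta>" using b i True by (auto simp: M_As DD_As_iff)
    have "mp \<sigma> (\<beta> ! (n - 1)) = \<beta> ! (n - 1)"
      by (rule nth_equalityI) (use len fx in auto)
    then show ?thesis using i True by (simp add: Tn_nth)
  qed (use i in \<open>simp add: Tn_nth\<close>)
qed

end

context bm2 begin

lemma LL3_ok:
  assumes wf: "wfP s \<phi>" and so: "sortf \<phi> \<le> n"
    and fv: "\<forall>(k, m, i) \<in> fvF \<phi>. m = n \<and> k \<noteq> Law \<longrightarrow> k = Lls \<and> i = h"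
    and gh: "g \<noteq> h" and ga: "(Lls, n, g) \<notin> allvF \<phi>" and xy: "x \<noteq> y" and xf: "x \<notin> fvN \<phi>"
    and e: "envOK \<rho>"
  shows "frc (LL3 n \<phi> h g x y) \<rho> root"
proof -
  define z where "z = Suc (x + y)"
  have zx: "z \<noteq> x" "z \<noteq> y" by (auto simp: z_def)
  define E where "E = appEq n (FV Lls n g) (FV Lls n h) y"
  define ant where "ant = all_lt y x E"
  have ant_eq: "ant = AllN y (Im (ExN z (EqN (Pl (NV y) (Sc (NV z))) (NV x))) E)"
    by (simp add: ant_def all_lt_def z_def)
  have nr: "1 \<le> n" "n \<le> s" using n1 ns by auto
  have Hin: "snd \<rho> Lls n h \<in> L n" using e nr unfolding envOK_def by (metis Dom.simps(3))
  obtain \<xi> where xi: "\<forall>m. bij_betw (\<xi> m) (A (n - 1)) (A (n - 1))"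
    "snd \<rho> Lls n h = enc (nu (n - 1) \<xi>)" "dec (snd \<rho> Lls n h) = nu (n - 1) \<xi>"
    using L_elim[OF nr Hin] by blast
  have fvm: "\<And>k m i. (k, m, i) \<in> fvF \<phi> \<Longrightarrow> m \<le> n" using sortf_ge so by (meson le_trans)
  have nog: "(Lls, n, g) \<notin> fvF \<phi>" using ga fvF_allvF by blast
  have main: "frc (AllF Lls n g (Im ant (substL n h g \<phi>))) (updN \<rho> x (lh \<beta>)) \<beta>"
    if b: "\<beta> \<in> M" "frc \<phi> \<rho> \<beta>" for \<beta>
  proof -
    define \<rho>x where "\<rho>x = updN \<rho> x (lh \<beta>)"
    have ex: "envOK \<rho>x" using envOK_updN[OF e] by (simp add: \<rho>x_def)
    have "agr \<rho>x \<rho> (fvN \<phi>) (fvF \<phi>)" using xf by (auto simp: agr_def \<rho>x_def updN_fst)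
    then have fx: "frc \<phi> \<rho>x \<beta>" using b(2) frc_coinc by blast
    have "frc (Im ant (substL n h g \<phi>)) (updF \<rho>x Lls n g G) \<beta>" if G: "G \<in> L n" for G
    proof -
      obtain \<zeta> where ze: "\<forall>m. bij_betw (\<zeta> m) (A (n - 1)) (A (n - 1))"
        "G = enc (nu (n - 1) \<zeta>)" "dec G = nu (n - 1) \<zeta>"
        using L_elim[OF nr G] by blast
      define \<rho>2 where "\<rho>2 = updF \<rho>x Lls n g G"
      have r2g: "snd \<rho>2 Lls n g = G" by (simp add: \<rho>2_def updF_snd)
      have r2h: "snd \<rho>2 Lls n h = snd \<rho> Lls n h" using gh by (simp add: \<rho>2_def updF_snd \<rho>x_def)
      have r2x: "fst \<rho>2 x = lh \<beta>" by (simp add: \<rho>2_def \<rho>x_def updN_fst)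
      have "frc (substL n h g \<phi>) \<rho>2 \<beta>'" if b': "\<beta>' \<in> M" "prec \<beta>' \<beta>" "frc ant \<rho>2 \<beta>'" for \<beta>'
      proof -
        have lhb: "lh \<beta> \<le> lh \<beta>'" using prec_lh[OF As_ne] b b' by (simp add: M_As)
        have agree: "\<zeta> c (\<beta> ! (n - 1) ! c) = \<xi> c (\<beta> ! (n - 1) ! c)" if c: "c < lh \<beta>" for c
        proof -
          define \<rho>c where "\<rho>c = updN \<rho>2 y c"
          have rc: "fst \<rho>c y = c" "fst \<rho>c x = lh \<beta>" "snd \<rho>c Lls n g = G" "snd \<rho>c Lls n h = snd \<rho> Lls n h"
            using xy r2g r2h r2x by (auto simp: \<rho>c_def updN_fst)
          have "frc (Im (ExN z (EqN (Pl (NV y) (Sc (NV z))) (NV x))) E) \<rho>c \<beta>'"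
            using b'(3) unfolding ant_eq \<rho>c_def by (simp only: frc.simps(7))
          then have "\<forall>\<beta>\<in>M. prec \<beta> \<beta>' \<longrightarrow> frc (ExN z (EqN (Pl (NV y) (Sc (NV z))) (NV x))) \<rho>c \<beta> \<longrightarrow> frc E \<rho>c \<beta>"
            by (simp only: frc.simps(6))
          then have imp: "frc (ExN z (EqN (Pl (NV y) (Sc (NV z))) (NV x))) \<rho>c \<beta>' \<longrightarrow> frc E \<rho>c \<beta>'"
            using b'(1) prec_refl by blast
          have "frc (ExN z (EqN (Pl (NV y) (Sc (NV z))) (NV x))) \<rho>c \<beta>'"
            unfolding frc.simps(8)
          proof
            fix P assume "P \<in> thru \<beta>'"
            then have "\<beta>' \<in> P" by (simp add: thru_def)
            then show "\<exists>\<beta>0\<in>P. \<exists>d. frc (EqN (Pl (NV y) (Sc (NV z))) (NV x)) (updN \<rho>c z d) \<beta>0"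
              using lt_frc[OF zx(1) zx(2)] rc c by simp
          qed
          then have fE: "frc E \<rho>c \<beta>'" using imp by blast
          have GA: "G \<in> A n" "snd \<rho> Lls n h \<in> A n" using G Hin L_A nr by auto
          have "\<forall>P\<in>thru \<beta>'. \<exists>\<gamma>\<in>P. dec G (take n \<gamma>, c) \<noteq> None \<and> dec G (take n \<gamma>, c) = dec (snd \<rho> Lls n h) (take n \<gamma>, c)"
            using fE appEq_frc[OF nr rc(3) GA(1) rc(4) GA(2) rc(1)] by (simp add: E_def)
          moreover obtain P where P: "P \<in> thru \<beta>'" using path_exists[OF b'(1)] by blast
          ultimately obtain \<gamma> where gam: "\<gamma> \<in> P" "dec G (take n \<gamma>, c) \<noteq> None"
            "dec G (take n \<gamma>, c) = dec (snd \<rho> Lls n h) (take n \<gamma>, c)" by blast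
          have gM: "\<gamma> \<in> M" using gam(1) P by (auto simp: thru_def is_path_def)
          have cg: "c < lh \<gamma>" and eqg: "\<zeta> c (\<gamma> ! (n - 1) ! c) = \<xi> c (\<gamma> ! (n - 1) ! c)"
            using gam(2,3) nu_at[OF gM nr, of \<zeta> c] nu_at[OF gM nr, of \<xi> c] ze(3) xi(3)
            by (auto split: if_splits)
          have bP: "\<beta>' \<in> P" using P by (simp add: thru_def)
          have ppath: "is_path M prec P" using P by (simp add: thru_def)
          have MD: "M = DD (As (s - 1))" by (rule M_As)
          have i: "n - 1 \<le> s - 1" using nr by simp
          have e1: "\<gamma> ! (n - 1) ! c = \<beta>' ! (n - 1) ! c"
          proof -
            have "prec \<gamma> \<beta>' \<or> prec \<beta>' \<gamma>" using path_lin[OF ppath gam(1) bP] .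
            then show ?thesis
            proof
              assume "prec \<gamma> \<beta>'"
              then show ?thesis using node_entry[of \<beta>' "s - 1" \<gamma> "n - 1" c] b'(1) gM i c lhb MD by simp
            next
              assume "prec \<beta>' \<gamma>"
              then show ?thesis using node_entry[of \<gamma> "s - 1" \<beta>' "n - 1" c] b'(1) gM i cg MD by simp
            qed
          qed
          have e2: "\<beta>' ! (n - 1) ! c = \<beta> ! (n - 1) ! c"
            using node_entry[of \<beta> "s - 1" \<beta>' "n - 1" c] b'(1,2) b(1) i c MD by simp
          show ?thesis using eqg e1 e2 by simp
        qed
        define \<sigma> where "\<sigma> = sw \<xi> \<zeta>"
        define \<tau> where "\<tau> = sw \<zeta> \<xi>"
        have g: "goodp \<sigma> \<tau>" unfolding \<sigma>_def \<tau>_def by (rule sw_good[OF xi(1) ze(1)])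
        have Tfix: "Tn \<sigma> \<beta> = \<beta>"
        proof (rule Tn_fix[OF b(1)])
          fix y' assume y': "y' < lh \<beta>"
          have "\<beta> ! (n - 1) ! y' \<in> A (n - 1)"
          proof -
            have "length (\<beta> ! (n - 1)) = lh \<beta>" "set (\<beta> ! (n - 1)) \<subseteq> A (n - 1)"
              using b(1) nr by (auto simp: M_As DD_As_iff)
            then show ?thesis using y' by (metis nth_mem subsetD)
          qed
          moreover have "inj_on (\<zeta> y') (A (n - 1))" using ze(1) by (simp add: bij_betw_def)
          ultimately show "\<sigma> y' (\<beta> ! (n - 1) ! y') = \<beta> ! (n - 1) ! y'"
            using agree[OF y', symmetric] by (simp add: \<sigma>_def sw_def inv_into_f_f)
        qed
        have f1: "frc \<phi> (Penv \<tau> \<rho>x) \<beta>" using frc_equiv[OF g wf ex b(1)] Tfix fx by simp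
        define \<rho>3 where "\<rho>3 = updF \<rho>2 Lls n h G"
        have PtH: "Pt \<tau> n (snd \<rho> Lls n h) = G"
          unfolding \<tau>_def using Pt_n_swap[OF xi(1) ze(1) xi(3)] ze(2) by simp
        have "agr (Penv \<tau> \<rho>x) \<rho>3 (fvN \<phi>) (fvF \<phi>)"
          unfolding agr_def
        proof (intro conjI ballI allI impI)
          fix i assume "i \<in> fvN \<phi>"
          show "fst (Penv \<tau> \<rho>x) i = fst \<rho>3 i" by (simp add: \<rho>3_def \<rho>2_def)
        next
          fix k m i assume kmi: "(k, m, i) \<in> fvF \<phi>"
          have mn: "m \<le> n" using fvm[OF kmi] .
          have ng: "(k, m, i) \<noteq> (Lls, n, g)" using kmi nog by blast
          have r3: "snd \<rho>3 k m i = (if (k, m, i) = (Lls, n, h) then G else snd \<rho> k m i)"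
            using ng by (auto simp: \<rho>3_def \<rho>2_def \<rho>x_def updF_snd)
          show "snd (Penv \<tau> \<rho>x) k m i = snd \<rho>3 k m i"
          proof (cases "m < n")
            case True
            then show ?thesis using r3 Pt_low[OF True] by (simp add: \<rho>x_def)
          next
            case False
            then have m: "m = n" using mn by simp
            show ?thesis
            proof (cases "k = Law")
              case True
              have "snd \<rho> Law n i \<in> B n" using e nr unfolding envOK_def by (metis Dom.simps(2))
              then show ?thesis using Pt_Bn[OF g] r3 True m by (simp add: \<rho>x_def)
            next
              case False
              then have "k = Lls" "i = h" using fv kmi m by auto
              then show ?thesis using r3 m PtH by (simp add: \<rho>x_def)
            qed
          qed
        qed
        then have "frc \<phi> \<rho>3 \<beta>" using f1 frc_coinc by blast
        then have "frc \<phi> \<rho>3 \<beta>'" using frc_mono b(1) b'(1,2) by blast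
        then show ?thesis using frc_subst[OF ga] r2g by (simp add: \<rho>3_def)
      qed
      then show ?thesis by (simp add: \<rho>2_def)
    qed
    then show ?thesis by (simp add: \<rho>x_def)
  qed
  have "frc (ExN x (AllF Lls n g (Im ant (substL n h g \<phi>)))) \<rho> \<beta>" if b: "\<beta> \<in> M" "frc \<phi> \<rho> \<beta>" for \<beta>
    unfolding frc.simps(8)
  proof
    fix P assume "P \<in> thru \<beta>"
    then have "\<beta> \<in> P" by (simp add: thru_def)
    then show "\<exists>\<beta>0\<in>P. \<exists>c. frc (AllF Lls n g (Im ant (substL n h g \<phi>))) (updN \<rho> x c) \<beta>0"
      using main[OF b] by blast
  qed
  then show ?thesis unfolding LL3_def by (simp add: ant_def E_def)
qed

end

definition swp :: "'a \<Rightarrow> 'a \<Rightarrow> 'a \<Rightarrow> 'a" where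
  "swp a b e = (if e = a then b else if e = b then a else e)"

lemma swp_bij: "a \<in> S \<Longrightarrow> b \<in> S \<Longrightarrow> bij_betw (swp a b) S S"
  by (rule bij_betw_byWitness[where f'="swp a b"]) (auto simp: swp_def)

context bm2 begin

lemma LL1_ok:
  assumes xy: "x \<noteq> y" and e: "envOK \<rho>"
  shows "frc (LL1 n x y i j) \<rho> root"
proof -
  define z where "z = Suc (x + y)"
  have zx: "z \<noteq> x" "z \<noteq> y" by (auto simp: z_def)
  have nr: "1 \<le> n" "n \<le> s" using n1 ns by auto
  define X where "X = fst \<rho> x"
  define u where "u = snd \<rho> Gen n i"
  have uA: "u \<in> A n" using e nr unfolding envOK_def u_def by (metis Dom.simps(1))
  define f where "f = dec u"
  have fR: "f \<in> Raw (As (n - 1))" using A_dec(1)[OF nr uA] by (simp add: f_def)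
  have MD: "M = DD (As (s - 1))" by (rule M_As)
  have i1: "n - 1 \<le> s - 1" "Suc (n - 1) = n" using nr by auto
  define E where "E = appEq n (FV Lls n j) (FV Gen n i) y"
  have body_eq: "all_le y x E = AllN y (Im (ExN z (EqN (Pl (NV y) (NV z)) (NV x))) E)"
    by (simp add: all_le_def z_def)
  have "\<exists>\<beta>\<in>P. \<exists>c\<in>L n. frc (all_le y x E) (updF \<rho> Lls n j c) \<beta>" if P: "P \<in> thru root" for P
  proof -
    have pp: "is_path (DD (As (s - 1))) prec P" using P by (simp add: thru_def MD)
    have PM: "P \<subseteq> M" using pp path_sub MD by blast
    have pn: "is_path (DD (As (n - 1))) prec (take n ` P)" using proj_path[OF pp i1(1)] i1(2) by simp
    have tD: "\<And>\<beta>. \<beta> \<in> M \<Longrightarrow> take n \<beta> \<in> DD (As (n - 1))" using take_M(1)[OF _ nr] by blast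
    have defd: "f (take n \<beta>2, y') = f (take n \<beta>, y')" if hh: "\<beta> \<in> M" "\<beta>2 \<in> M" "prec \<beta>2 \<beta>" "f (take n \<beta>, y') \<noteq> None" for \<beta> \<beta>2 y'
    proof -
      obtain v where v: "f (take n \<beta>, y') = Some v" using hh(4) by blast
      have "f (take n \<beta>2, y') = Some v" using RawD(3)[OF fR tD[OF hh(1)] tD[OF hh(2)] take_prec[OF hh(3)] v] .
      then show ?thesis using v by simp
    qed
    have comb: "\<exists>\<beta>\<in>P. prec \<beta> \<beta>1 \<and> prec \<beta> \<beta>2" if hh: "\<beta>1 \<in> P" "\<beta>2 \<in> P" for \<beta>1 \<beta>2
      using path_lin[OF pp hh] hh prec_refl by blast
    have exf: "\<exists>e\<in>P. f (take n e, y') \<noteq> None" for y'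
    proof -
      obtain x' where "x' \<in> take n ` P" "f (x', y') \<noteq> None" using RawD(4)[OF fR pn] by blast
      then show ?thesis by blast
    qed
    have exl: "\<exists>e\<in>P. lh e = N" for N using path_lh_As[OF pp] .
    have lhmono: "lh \<beta>1 \<le> lh \<beta>2" if hh: "\<beta>1 \<in> P" "\<beta>2 \<in> P" "prec \<beta>2 \<beta>1" for \<beta>1 \<beta>2
      using prec_lh[OF As_ne, of \<beta>1 "s - 1" \<beta>2] hh PM MD by auto
    have claim: "\<exists>\<beta>\<in>P. N < lh \<beta> \<and> (\<forall>y'\<le>N. f (take n \<beta>, y') \<noteq> None)" for N
    proof (induction N)
      case 0
      obtain e0 where e0: "e0 \<in> P" "f (take n e0, 0) \<noteq> None" using exf by blast
      obtain e1 where e1: "e1 \<in> P" "lh e1 = 1" using exl by blast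
      obtain \<beta> where b: "\<beta> \<in> P" "prec \<beta> e0" "prec \<beta> e1" using comb[OF e0(1) e1(1)] by blast
      have "1 \<le> lh \<beta>" using lhmono[OF e1(1) b(1) b(3)] e1(2) by simp
      moreover have "e0 \<in> M" "\<beta> \<in> M" using e0(1) b(1) PM by auto
      then have "f (take n \<beta>, 0) \<noteq> None" using defd[OF _ _ b(2) e0(2)] e0(2) by simp
      ultimately have "0 < lh \<beta> \<and> (\<forall>y'\<le>0. f (take n \<beta>, y') \<noteq> None)" by simp
      then show ?case using b(1) by blast
    next
      case (Suc N)
      obtain \<beta>0 where b0: "\<beta>0 \<in> P" "N < lh \<beta>0" "\<forall>y'\<le>N. f (take n \<beta>0, y') \<noteq> None" using Suc.IH by blast
      obtain e0 where e0: "e0 \<in> P" "f (take n e0, Suc N) \<noteq> None" using exf by blast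
      obtain e1 where e1: "e1 \<in> P" "lh e1 = Suc (Suc N)" using exl by blast
      obtain \<beta>1 where b1: "\<beta>1 \<in> P" "prec \<beta>1 \<beta>0" "prec \<beta>1 e0" using comb[OF b0(1) e0(1)] by blast
      obtain \<beta> where b: "\<beta> \<in> P" "prec \<beta> \<beta>1" "prec \<beta> e1" using comb[OF b1(1) e1(1)] by blast
      have pb0: "prec \<beta> \<beta>0" "prec \<beta> e0" using b(2) b1(2,3) prec_trans by blast+
      have "Suc N < lh \<beta>" using lhmono[OF e1(1) b(1) b(3)] e1(2) by simp
      moreover have "\<forall>y'\<le>Suc N. f (take n \<beta>, y') \<noteq> None"
      proof (intro allI impI)
        fix y' assume y': "y' \<le> Suc N"
        show "f (take n \<beta>, y') \<noteq> None"
        proof (cases "y' = Suc N")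
          case True
          have "e0 \<in> M" "\<beta> \<in> M" using e0(1) b(1) PM by auto
          then show ?thesis using defd[OF _ _ pb0(2) e0(2)] e0(2) True by simp
        next
          case False then have "y' \<le> N" using y' by simp
          moreover have "\<beta>0 \<in> M" "\<beta> \<in> M" using b0(1) b(1) PM by auto
          ultimately show ?thesis using defd[OF _ _ pb0(1), of y'] b0(3) by simp
        qed
      qed
      ultimately show ?case using b(1) by blast
    qed
    obtain \<beta> where b: "\<beta> \<in> P" "X < lh \<beta>" "\<forall>y'\<le>X. f (take n \<beta>, y') \<noteq> None" using claim by blast
    have bM: "\<beta> \<in> M" using b(1) PM by blast
    define v where "v y' = the (f (take n \<beta>, y'))" for y'
    have fv: "f (take n \<beta>, y') = Some (v y')" if hh: "y' \<le> X" for y' using b(3) hh by (auto simp: v_def)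
    have vA: "v y' \<in> A (n - 1)" if hh: "y' \<le> X" for y'
      using RawD(2)[OF fR fv[OF hh]] by (simp add: last_As)
    have eA: "\<beta> ! (n - 1) ! y' \<in> A (n - 1)" if hh: "y' < lh \<beta>" for y'
    proof -
      have "length (\<beta> ! (n - 1)) = lh \<beta>" "set (\<beta> ! (n - 1)) \<subseteq> A (n - 1)"
        using bM nr by (auto simp: M_As DD_As_iff)
      then show ?thesis using hh by (metis nth_mem subsetD)
    qed
    define \<xi> where "\<xi> y' = (if y' \<le> X then swp (\<beta> ! (n - 1) ! y') (v y') else (\<lambda>e. e))" for y'
    have xib: "\<forall>m. bij_betw (\<xi> m) (A (n - 1)) (A (n - 1))"
    proof
      fix m show "bij_betw (\<xi> m) (A (n - 1)) (A (n - 1))"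
      proof (cases "m \<le> X")
        case True
        then show ?thesis using swp_bij[OF eA vA[OF True]] b(2) by (simp add: \<xi>_def)
      next
        case False then show ?thesis by (simp add: \<xi>_def bij_betw_id[unfolded id_def])
      qed
    qed
    define c where "c = enc (nu (n - 1) \<xi>)"
    have cL: "c \<in> L n" using nu_L[OF nr(1) xib] by (simp add: c_def)
    have nuL: "nu (n - 1) \<xi> \<in> LRaw (As (n - 1))" using xib unfolding LRaw_def nu_def by (auto simp: last_As)
    have dc: "dec c = nu (n - 1) \<xi>" using dec_enc LRaw_Univ[OF nr] nuL by (auto simp: c_def)
    define \<rho>1 where "\<rho>1 = updF \<rho> Lls n j c"
    have "frc (all_le y x E) \<rho>1 \<beta>"
      unfolding body_eq frc.simps(7) frc.simps(6)
    proof (intro allI ballI impI)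
      fix cy \<beta>'' assume b'': "\<beta>'' \<in> M" "prec \<beta>'' \<beta>" "frc (ExN z (EqN (Pl (NV y) (NV z)) (NV x))) (updN \<rho>1 y cy) \<beta>''"
      define \<rho>c where "\<rho>c = updN \<rho>1 y cy"
      have rc: "fst \<rho>c y = cy" "fst \<rho>c x = X" "snd \<rho>c Lls n j = c" "snd \<rho>c Gen n i = u"
        using xy by (auto simp: \<rho>c_def \<rho>1_def updN_fst updF_snd X_def u_def)
      have "fst \<rho>c y \<le> fst \<rho>c x" using le_frc_D[OF zx b''(1)] b''(3) unfolding \<rho>c_def by blast
      then have cyX: "cy \<le> X" using rc by simp
      have lhb: "lh \<beta> \<le> lh \<beta>''" using prec_lh[OF As_ne] bM b''(1,2) by (simp add: M_As)
      have cyl: "cy < lh \<beta>''" using cyX b(2) lhb by simp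
      have ent: "\<beta>'' ! (n - 1) ! cy = \<beta> ! (n - 1) ! cy"
        using node_entry[of \<beta> "s - 1" \<beta>'' "n - 1" cy] bM b''(1,2) i1(1) cyX b(2) MD by simp
      have d1: "dec c (take n \<beta>'', cy) = Some (v cy)"
        using nu_at[OF b''(1) nr, of \<xi> cy] cyl ent cyX dc by (simp add: \<xi>_def swp_def)
      have d2: "dec u (take n \<beta>'', cy) = Some (v cy)"
        using defd[OF bM b''(1,2), of cy] fv[OF cyX] by (simp add: f_def)
      have cA: "c \<in> A n" using cL L_A nr by auto
      have "\<forall>P\<in>thru \<beta>''. \<exists>\<gamma>\<in>P. dec c (take n \<gamma>, cy) \<noteq> None \<and> dec c (take n \<gamma>, cy) = dec u (take n \<gamma>, cy)"
      proof
        fix P' assume "P' \<in> thru \<beta>''"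
        then have "\<beta>'' \<in> P'" by (simp add: thru_def)
        then show "\<exists>\<gamma>\<in>P'. dec c (take n \<gamma>, cy) \<noteq> None \<and> dec c (take n \<gamma>, cy) = dec u (take n \<gamma>, cy)"
          using d1 d2 by auto
      qed
      then show "frc E (updN \<rho>1 y cy) \<beta>''"
        using appEq_frc[OF nr rc(3) cA rc(4) uA rc(1)] by (simp add: E_def \<rho>c_def)
    qed
    then show ?thesis using b(1) cL by (auto simp: \<rho>1_def)
  qed
  then show ?thesis unfolding LL1_def by (simp add: E_def)
qed

end

theorem theorem8p1:
  fixes num :: "nat \<Rightarrow> 'u"
    and enc :: "('u list list \<times> nat \<Rightarrow> 'u option) \<Rightarrow> 'u"
    and s :: nat
  assumes "1 \<le> s"
    and "inj num"
    and "inj_on enc (beth.Univ num enc s)"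
  shows "\<forall>n. 1 \<le> n \<and> n \<le> s \<longrightarrow>
      (\<forall>x y i j. x \<noteq> y \<longrightarrow> beth.forces_closure num enc s (LL1 n x y i j))
    \<and> (\<forall>i j. beth.forces_closure num enc s (LL2 n i j))
    \<and> (\<forall>\<phi> h g x y.
          wfP s \<phi> \<and> sortf \<phi> \<le> n
        \<and> (\<forall>(k, m, i) \<in> fvF \<phi>. m = n \<and> k \<noteq> Law \<longrightarrow> k = Lls \<and> i = h)
        \<and> g \<noteq> h \<and> (Lls, n, g) \<notin> allvF \<phi> \<and> x \<noteq> y \<and> x \<notin> fvN \<phi>
        \<longrightarrow> beth.forces_closure num enc s (LL3 n \<phi> h g x y))"
proof -
  interpret bm num enc s by unfold_locales (use assms in auto)
  show ?thesis
  proof (intro allI impI)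
    fix n assume n: "1 \<le> n \<and> n \<le> s"
    interpret B2: bm2 num enc s n by unfold_locales (use n in auto)
    have l1: "\<forall>x y i j. x \<noteq> y \<longrightarrow> forces_closure (LL1 n x y i j)"
      using B2.LL1_ok by (auto simp: forces_closure_def)
    have l2: "\<forall>i j. forces_closure (LL2 n i j)"
      using LL2_ok by (auto simp: forces_closure_def)
    have l3: "\<forall>\<phi> h g x y.
          wfP s \<phi> \<and> sortf \<phi> \<le> n
        \<and> (\<forall>(k, m, i) \<in> fvF \<phi>. m = n \<and> k \<noteq> Law \<longrightarrow> k = Lls \<and> i = h)
        \<and> g \<noteq> h \<and> (Lls, n, g) \<notin> allvF \<phi> \<and> x \<noteq> y \<and> x \<notin> fvN \<phi>
        \<longrightarrow> forces_closure (LL3 n \<phi> h g x y)"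
    proof (intro allI impI)
      fix \<phi> h g x y
      assume a: "wfP s \<phi> \<and> sortf \<phi> \<le> n
        \<and> (\<forall>(k, m, i) \<in> fvF \<phi>. m = n \<and> k \<noteq> Law \<longrightarrow> k = Lls \<and> i = h)
        \<and> g \<noteq> h \<and> (Lls, n, g) \<notin> allvF \<phi> \<and> x \<noteq> y \<and> x \<notin> fvN \<phi>"
      show "forces_closure (LL3 n \<phi> h g x y)"
        unfolding forces_closure_def
      proof (intro allI impI)
        fix \<rho> assume "envOK \<rho>"
        then show "frc (LL3 n \<phi> h g x y) \<rho> root" using B2.LL3_ok a by blast
      qed
    qed
    show "(\<forall>x y i j. x \<noteq> y \<longrightarrow> forces_closure (LL1 n x y i j))
    \<and> (\<forall>i j. forces_closure (LL2 n i j))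
    \<and> (\<forall>\<phi> h g x y.
          wfP s \<phi> \<and> sortf \<phi> \<le> n
        \<and> (\<forall>(k, m, i) \<in> fvF \<phi>. m = n \<and> k \<noteq> Law \<longrightarrow> k = Lls \<and> i = h)
        \<and> g \<noteq> h \<and> (Lls, n, g) \<notin> allvF \<phi> \<and> x \<noteq> y \<and> x \<notin> fvN \<phi>
        \<longrightarrow> forces_closure (LL3 n \<phi> h g x y))"
      using l1 l2 l3 by blast
  qed
qed

end
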